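(* Let $n\ge4$ and let $H$ be an admissible tensor on $\mathbb R^n_+$. If $Z_{abcd}=0$ in $\mathbb R^n_+$ for all $a,b,c,d$ and $\partial_nH_{ij}=0$ on $\partial\mathbb R^n_+$ for all $i,j=1,\dots,n-1$, then $H\equiv0$ in $\mathbb R^n_+$.
   Context: $\mathbb R^n_+=\{x\in\mathbb R^n:x_n\ge0\}$, $d=[\frac{n-2}{2}]$; indices $a,b,c,d,e,f$ range over $1,\dots,n$ and $i,j,k$ over $1,\dots,n-1$, with summation over repeated indices. An admissible tensor is a symmetric trace-free ($\sum_aH_{aa}=0$) 2-tensor $H$ on $\mathbb R^n_+$ with polynomial components $H_{ab}(x)=\sum_{1\le|\alpha|\le d}h_{ab,\alpha}x^\alpha$ ($\alpha$ multi-indices, $h_{ab,\alpha}\in\mathbb R$) satisfying $H_{an}\equiv0$ for all $a$, $\partial_kH_{ij}(0)=0$ for all $i,j,k\le n-1$, and $\sum_{j=1}^{n-1}x_jH_{ij}(x)=0$ for $x\in\partial\mathbb R^n_+$, $i\le n-1$. The algebraic Schouten tensor is $A_{ac}=\partial_c\partial_eH_{ae}+\partial_a\partial_eH_{ce}-\partial_e\partial_eH_{ac}-\frac1{n-1}\partial_e\partial_fH_{ef}\delta_{ac}$ and the algebraic Weyl tensor is $Z_{abcd}=\partial_b\partial_dH_{ac}-\partial_b\partial_cH_{ad}+\partial_a\partial_cH_{bd}-\partial_a\partial_dH_{bc}+\frac1{n-2}(A_{ac}\delta_{bd}-A_{ad}\delta_{bc}+A_{bd}\delta_{ac}-A_{bc}\delta_{ad})$.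 *)

theory Defs
  imports "HOL-Analysis.Analysis"
begin

text \<open>Points of R^n are functions x :: nat => real; only coordinates 1..n matter.
  The closed upper half space R^n_+ is {x. x n >= 0}, its boundary {x. x n = 0}.\<close>

definition pd :: "nat \<Rightarrow> ((nat \<Rightarrow> real) \<Rightarrow> real) \<Rightarrow> (nat \<Rightarrow> real) \<Rightarrow> real" where
  "pd c f x = deriv (\<lambda>t. f (x(c := x c + t))) 0"

definition multi_indices :: "nat \<Rightarrow> nat \<Rightarrow> (nat \<Rightarrow> nat) set" where
  "multi_indices n dd = {\<alpha>. (\<forall>k. k \<notin> {1..n} \<longrightarrow> \<alpha> k = 0) \<and>
      1 \<le> (\<Sum>k=1..n. \<alpha> k) \<and> (\<Sum>k=1..n. \<alpha> k) \<le> dd}"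

definition monomial_fun :: "nat \<Rightarrow> (nat \<Rightarrow> nat) \<Rightarrow> (nat \<Rightarrow> real) \<Rightarrow> real" where
  "monomial_fun n \<alpha> x = (\<Prod>k=1..n. x k ^ \<alpha> k)"

definition admissible :: "nat \<Rightarrow> (nat \<Rightarrow> nat \<Rightarrow> (nat \<Rightarrow> real) \<Rightarrow> real) \<Rightarrow> bool" where
  "admissible n H \<longleftrightarrow>
     (\<exists>h :: nat \<Rightarrow> nat \<Rightarrow> (nat \<Rightarrow> nat) \<Rightarrow> real.
        \<forall>a\<in>{1..n}. \<forall>b\<in>{1..n}. \<forall>x.
          H a b x = (\<Sum>\<alpha>\<in>multi_indices n ((n - 2) div 2). h a b \<alpha> * monomial_fun n \<alpha> x))
   \<and> (\<forall>a\<in>{1..n}. \<forall>b\<in>{1..n}. \<forall>x. x n \<ge> 0 \<longrightarrow> H a b x = H b a x)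
   \<and> (\<forall>x. x n \<ge> 0 \<longrightarrow> (\<Sum>a=1..n. H a a x) = 0)
   \<and> (\<forall>a\<in>{1..n}. \<forall>x. x n \<ge> 0 \<longrightarrow> H a n x = 0)
   \<and> (\<forall>i\<in>{1..n-1}. \<forall>j\<in>{1..n-1}. \<forall>k\<in>{1..n-1}. pd k (H i j) (\<lambda>_. 0) = 0)
   \<and> (\<forall>i\<in>{1..n-1}. \<forall>x. x n = 0 \<longrightarrow> (\<Sum>j=1..n-1. x j * H i j x) = 0)"

definition schouten :: "nat \<Rightarrow> (nat \<Rightarrow> nat \<Rightarrow> (nat \<Rightarrow> real) \<Rightarrow> real) \<Rightarrow> nat \<Rightarrow> nat \<Rightarrow> (nat \<Rightarrow> real) \<Rightarrow> real" where
  "schouten n H a c x =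
     (\<Sum>e=1..n. pd c (pd e (H a e)) x) + (\<Sum>e=1..n. pd a (pd e (H c e)) x)
     - (\<Sum>e=1..n. pd e (pd e (H a c)) x)
     - (1 / (real n - 1)) * (\<Sum>e=1..n. \<Sum>f=1..n. pd e (pd f (H e f)) x) * (if a = c then 1 else 0)"

definition weyl :: "nat \<Rightarrow> (nat \<Rightarrow> nat \<Rightarrow> (nat \<Rightarrow> real) \<Rightarrow> real) \<Rightarrow> nat \<Rightarrow> nat \<Rightarrow> nat \<Rightarrow> nat \<Rightarrow> (nat \<Rightarrow> real) \<Rightarrow> real" where
  "weyl n H a b c d x =
     pd b (pd d (H a c)) x - pd b (pd c (H a d)) x + pd a (pd c (H b d)) x - pd a (pd d (H b c)) x
     + (1 / (real n - 2)) *
       (schouten n H a c x * (if b = d then 1 else 0) - schouten n H a d x * (if b = c then 1 else 0)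
        + schouten n H b d x * (if a = c then 1 else 0) - schouten n H b c x * (if a = d then 1 else 0))"

end

theory Submission
  imports Defs "HOL-Computational_Algebra.Polynomial"
begin

inductive_set polyf :: "nat set \<Rightarrow> ((nat \<Rightarrow> real) \<Rightarrow> real) set" for n where
  pconst: "(\<lambda>x. c) \<in> polyf n"
| pcoord: "k \<in> n \<Longrightarrow> (\<lambda>x. x k) \<in> polyf n"
| padd: "f \<in> polyf n \<Longrightarrow> g \<in> polyf n \<Longrightarrow> (\<lambda>x. f x + g x) \<in> polyf n"
| pmult: "f \<in> polyf n \<Longrightarrow> g \<in> polyf n \<Longrightarrow> (\<lambda>x. f x * g x) \<in> polyf n"

lemma sum_ind: fixes v :: "nat \<Rightarrow> real" shows "finite A \<Longrightarrow> (\<Sum>i\<in>A. v i * (if i = k then 1 else 0)) = (if k \<in> A then v k else (0::real))"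
proof -
  assume "finite A"
  have "(\<Sum>i\<in>A. v i * (if i = k then 1 else 0)) = (\<Sum>i\<in>A. if i = k then v i else 0)"
    by (rule sum.cong) auto
  then show ?thesis using \<open>finite A\<close> by (simp add: sum.delta')
qed

lemma sum_ind2: fixes v :: "nat \<Rightarrow> real" shows "finite A \<Longrightarrow> (\<Sum>i\<in>A. (if i = k then 1 else 0) * v i) = (if k \<in> A then v k else (0::real))"
  using sum_ind[where A=A and k=k] by (simp add: mult.commute)

definition lin :: "(nat \<Rightarrow> real) \<Rightarrow> (nat \<Rightarrow> real) \<Rightarrow> real \<Rightarrow> nat \<Rightarrow> real" where
  "lin y v t = (\<lambda>i. y i + t * v i)"

lemma polyf_line:
  assumes "f \<in> polyf n" and fin: "finite n"
  shows "\<exists>Df. (\<forall>i. Df i \<in> polyf n) \<and>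
    (\<forall>y v t. ((\<lambda>s. f (lin y v s)) has_real_derivative (\<Sum>i\<in>n. v i * Df i (lin y v t))) (at t))"
  using assms(1)
proof induction
  case (pconst c)
  show ?case by (rule exI[of _ "\<lambda>i x. 0"]) (auto intro: polyf.pconst)
next
  case (pcoord k)
  show ?case
  proof (rule exI[of _ "\<lambda>i x. if i = k then 1 else 0"], intro conjI allI)
    fix i show "(\<lambda>x. if i = k then 1 else 0 :: real) \<in> polyf n" by (auto intro: polyf.pconst)
  next
    fix y v :: "nat \<Rightarrow> real" and t :: real
    have s: "(\<Sum>i\<in>n. v i * (if i = k then 1 else 0)) = v k"
      using pcoord sum_ind[where A="n" and k=k] fin by simp
    have "((\<lambda>s. y k + s * v k) has_real_derivative v k) (at t)"
      by (auto intro!: derivative_eq_intros)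
    then show "((\<lambda>s. lin y v s k) has_real_derivative (\<Sum>i\<in>n. v i * (if i = k then 1 else 0))) (at t)"
      unfolding s lin_def by simp
  qed
next
  case (padd f g)
  then obtain Df Dg where f: "\<forall>i. Df i \<in> polyf n" "\<forall>y v t. ((\<lambda>s. f (lin y v s)) has_real_derivative (\<Sum>i\<in>n. v i * Df i (lin y v t))) (at t)"
    and g: "\<forall>i. Dg i \<in> polyf n" "\<forall>y v t. ((\<lambda>s. g (lin y v s)) has_real_derivative (\<Sum>i\<in>n. v i * Dg i (lin y v t))) (at t)" by blast
  show ?case
  proof (rule exI[of _ "\<lambda>i x. Df i x + Dg i x"], intro conjI allI)
    fix i show "(\<lambda>x. Df i x + Dg i x) \<in> polyf n" using f g by (auto intro: polyf.padd)
  next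
    fix y v :: "nat \<Rightarrow> real" and t :: real
    have "((\<lambda>s. f (lin y v s) + g (lin y v s)) has_real_derivative (\<Sum>i\<in>n. v i * Df i (lin y v t)) + (\<Sum>i\<in>n. v i * Dg i (lin y v t))) (at t)"
      using f g by (auto intro!: derivative_eq_intros)
    then show "((\<lambda>s. f (lin y v s) + g (lin y v s)) has_real_derivative (\<Sum>i\<in>n. v i * (Df i (lin y v t) + Dg i (lin y v t)))) (at t)"
      by (simp add: distrib_left sum.distrib)
  qed
next
  case (pmult f g)
  then obtain Df Dg where f: "\<forall>i. Df i \<in> polyf n" "\<forall>y v t. ((\<lambda>s. f (lin y v s)) has_real_derivative (\<Sum>i\<in>n. v i * Df i (lin y v t))) (at t)"
    and g: "\<forall>i. Dg i \<in> polyf n" "\<forall>y v t. ((\<lambda>s. g (lin y v s)) has_real_derivative (\<Sum>i\<in>n. v i * Dg i (lin y v t))) (at t)" by blast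
  show ?case
  proof (rule exI[of _ "\<lambda>i x. Df i x * g x + f x * Dg i x"], intro conjI allI)
    fix i show "(\<lambda>x. Df i x * g x + f x * Dg i x) \<in> polyf n" using f(1) g(1) \<open>f \<in> polyf n\<close> \<open>g \<in> polyf n\<close> by (intro polyf.padd polyf.pmult) auto
  next
    fix y v :: "nat \<Rightarrow> real" and t :: real
    have "((\<lambda>s. f (lin y v s) * g (lin y v s)) has_real_derivative (\<Sum>i\<in>n. v i * Df i (lin y v t)) * g (lin y v t) + f (lin y v t) * (\<Sum>i\<in>n. v i * Dg i (lin y v t))) (at t)"
      using f(2) g(2) by (auto intro!: derivative_eq_intros)
    then show "((\<lambda>s. f (lin y v s) * g (lin y v s)) has_real_derivative (\<Sum>i\<in>n. v i * (Df i (lin y v t) * g (lin y v t) + f (lin y v t) * Dg i (lin y v t)))) (at t)"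
      by (simp add: distrib_left sum.distrib sum_distrib_left sum_distrib_right mult_ac)
  qed
qed

lemma upd_lin: "x(c := x c + s) = lin x (\<lambda>i. if i = c then 1 else 0) s"
  by (auto simp: lin_def fun_eq_iff)

lemma lin_upd_base: "lin (x(c := x c + w)) (\<lambda>i. if i = c then 1 else 0) s = lin x (\<lambda>i. if i = c then 1 else 0) (w + s)"
  by (auto simp: lin_def fun_eq_iff algebra_simps)

lemma polyf_pd_ex:
  assumes "f \<in> polyf n" "finite n"
  shows "\<exists>Df. (\<forall>i. Df i \<in> polyf n) \<and> (\<forall>c x. pd c f x = (if c \<in> n then Df c x else 0))
     \<and> (\<forall>y v t. ((\<lambda>s. f (lin y v s)) has_real_derivative (\<Sum>i\<in>n. v i * Df i (lin y v t))) (at t))"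
proof -
  obtain Df where D: "\<forall>i. Df i \<in> polyf n"
    "\<forall>y v t. ((\<lambda>s. f (lin y v s)) has_real_derivative (\<Sum>i\<in>n. v i * Df i (lin y v t))) (at t)"
    using polyf_line[OF assms] by blast
  have "pd c f x = (if c \<in> n then Df c x else 0)" for c x
  proof -
    have "((\<lambda>s. f (x(c := x c + s))) has_real_derivative (\<Sum>i\<in>n. (if i = c then 1 else 0) * Df i (lin x (\<lambda>i. if i = c then 1 else 0) 0))) (at 0)"
      unfolding upd_lin by (rule D(2)[rule_format])
    moreover have "lin x (\<lambda>i. if i = c then 1 else 0) 0 = x" by (simp add: lin_def)
    ultimately have "((\<lambda>s. f (x(c := x c + s))) has_real_derivative (if c \<in> n then Df c x else 0)) (at 0)"
      using assms(2) by (simp only: sum_ind2)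
    then show ?thesis unfolding pd_def by (rule DERIV_imp_deriv)
  qed
  with D show ?thesis by blast
qed

lemma polyf_zero[intro,simp]: "(\<lambda>x. 0) \<in> polyf n" using polyf.pconst[of 0] .

lemma polyf_pd[intro,simp]: "f \<in> polyf n \<Longrightarrow> finite n \<Longrightarrow> pd c f \<in> polyf n"
proof -
  assume "f \<in> polyf n" "finite n"
  then obtain Df where "\<forall>i. Df i \<in> polyf n" "\<forall>c x. pd c f x = (if c \<in> n then Df c x else 0)"
    using polyf_pd_ex by blast
  then have "pd c f = (if c \<in> n then Df c else (\<lambda>x. 0))" by auto
  then show ?thesis using \<open>\<forall>i. Df i \<in> polyf n\<close> by simp
qed

lemma polyf_line_pd:
  assumes "f \<in> polyf n" "finite n"
  shows "((\<lambda>s. f (lin y v s)) has_real_derivative (\<Sum>i\<in>n. v i * pd i f (lin y v t))) (at t)"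
proof -
  obtain Df where "\<forall>c x. pd c f x = (if c \<in> n then Df c x else 0)"
    "\<forall>y v t. ((\<lambda>s. f (lin y v s)) has_real_derivative (\<Sum>i\<in>n. v i * Df i (lin y v t))) (at t)"
    using polyf_pd_ex[OF assms] by blast
  moreover have "(\<Sum>i\<in>n. v i * pd i f (lin y v t)) = (\<Sum>i\<in>n. v i * Df i (lin y v t))"
    by (rule sum.cong) (use calculation in auto)
  ultimately show ?thesis by simp
qed

lemma polyf_coord_deriv:
  assumes "f \<in> polyf n" "finite n"
  shows "((\<lambda>s. f (x(c := x c + s))) has_real_derivative pd c f (x(c := x c + w))) (at w)"
proof -
  have "((\<lambda>s. f (lin x (\<lambda>i. if i = c then 1 else 0) s)) has_real_derivative
     (\<Sum>i\<in>n. (if i = c then 1 else 0) * pd i f (lin x (\<lambda>i. if i = c then 1 else 0) w))) (at w)"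
    by (rule polyf_line_pd[OF assms])
  moreover have "pd c f y = 0" if "c \<notin> n" for y
    using polyf_pd_ex[OF assms] that by auto
  ultimately show ?thesis unfolding upd_lin
    using assms(2) by (simp only: sum_ind2) (auto split: if_splits)
qed



definition pf :: "((nat \<Rightarrow> real) \<Rightarrow> real) \<Rightarrow> bool" where
  "pf f \<longleftrightarrow> (\<exists>n. finite n \<and> f \<in> polyf n)"

lemma polyf_mono: "f \<in> polyf n \<Longrightarrow> n \<subseteq> m \<Longrightarrow> f \<in> polyf m"
  by (induction rule: polyf.induct) (auto intro: polyf.intros)

lemma pf_two: "pf f \<Longrightarrow> pf g \<Longrightarrow> \<exists>n. finite n \<and> f \<in> polyf n \<and> g \<in> polyf n"
  unfolding pf_def by (metis finite_Un sup.cobounded1 sup.cobounded2 polyf_mono)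

lemma pd_from_deriv:
  "((\<lambda>s. F (x(c := x c + s))) has_real_derivative D) (at 0) \<Longrightarrow> pd c F x = D"
  unfolding pd_def by (rule DERIV_imp_deriv)

lemma polyf_deriv0':
  "f \<in> polyf n \<Longrightarrow> finite n \<Longrightarrow> ((\<lambda>s. f (x(c := x c + s))) has_real_derivative pd c f x) (at 0)"
  using polyf_coord_deriv[of f n x c 0] by simp

lemma polyf_deriv0: "pf f \<Longrightarrow> ((\<lambda>s. f (x(c := x c + s))) has_real_derivative pd c f x) (at 0)"
  unfolding pf_def using polyf_deriv0' by blast

lemma polyf_cmult[intro,simp]: "f \<in> polyf n \<Longrightarrow> (\<lambda>x. a * f x) \<in> polyf n"
  by (rule polyf.pmult[OF polyf.pconst])
lemma polyf_multc[intro,simp]: "f \<in> polyf n \<Longrightarrow> (\<lambda>x. f x * a) \<in> polyf n"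
  by (rule polyf.pmult[OF _ polyf.pconst])
lemma polyf_const[intro,simp]: "(\<lambda>x. a) \<in> polyf n" by (rule polyf.pconst)
lemma polyf_add[intro,simp]: "f \<in> polyf n \<Longrightarrow> g \<in> polyf n \<Longrightarrow> (\<lambda>x. f x + g x) \<in> polyf n"
  by (rule polyf.padd)
lemma polyf_mult[intro,simp]: "f \<in> polyf n \<Longrightarrow> g \<in> polyf n \<Longrightarrow> (\<lambda>x. f x * g x) \<in> polyf n"
  by (rule polyf.pmult)
lemma polyf_uminus[intro,simp]: "f \<in> polyf n \<Longrightarrow> (\<lambda>x. - f x) \<in> polyf n"
  using polyf_cmult[of f n "-1"] by simp
lemma polyf_diff[intro,simp]: "f \<in> polyf n \<Longrightarrow> g \<in> polyf n \<Longrightarrow> (\<lambda>x. f x - g x) \<in> polyf n"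
  using polyf_add[of f n "\<lambda>x. - g x"] by simp
lemma polyf_coord[intro,simp]: "k \<in> n \<Longrightarrow> (\<lambda>x. x k) \<in> polyf n" by (rule polyf.pcoord)
lemma polyf_sum[intro,simp]: "(\<And>i. i \<in> A \<Longrightarrow> F i \<in> polyf n) \<Longrightarrow> (\<lambda>x. \<Sum>i\<in>A. F i x) \<in> polyf n"
proof (induction A rule: infinite_finite_induct)
  case (infinite A) then show ?case by simp
next
  case empty then show ?case by simp
next
  case (insert a A) then show ?case by (simp add: polyf.padd)
qed
lemma polyf_power[intro,simp]: "f \<in> polyf n \<Longrightarrow> (\<lambda>x. f x ^ m) \<in> polyf n"
  by (induction m) (simp_all add: polyf.pmult)

lemma pf_const[simp]: "pf (\<lambda>x. a)" unfolding pf_def by (rule exI[of _ "{}"]) simp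
lemma pf_coord[simp]: "pf (\<lambda>x. x k)" unfolding pf_def by (rule exI[of _ "{k}"]) simp
lemma pf_add[simp]: "pf f \<Longrightarrow> pf g \<Longrightarrow> pf (\<lambda>x. f x + g x)" using pf_two unfolding pf_def by blast
lemma pf_mult[simp]: "pf f \<Longrightarrow> pf g \<Longrightarrow> pf (\<lambda>x. f x * g x)" using pf_two unfolding pf_def by blast
lemma pf_diff[simp]: "pf f \<Longrightarrow> pf g \<Longrightarrow> pf (\<lambda>x. f x - g x)" using pf_two unfolding pf_def by blast
lemma pf_uminus[simp]: "pf f \<Longrightarrow> pf (\<lambda>x. - f x)" unfolding pf_def by (metis polyf_uminus)
lemma pf_cmult[simp]: "pf f \<Longrightarrow> pf (\<lambda>x. a * f x)" unfolding pf_def by (metis polyf_cmult)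
lemma pf_multc[simp]: "pf f \<Longrightarrow> pf (\<lambda>x. f x * a)" unfolding pf_def by (metis polyf_multc)
lemma pf_pd[simp]: "pf f \<Longrightarrow> pf (pd c f)" unfolding pf_def by (metis polyf_pd)
lemma pf_power[simp]: "pf f \<Longrightarrow> pf (\<lambda>x. f x ^ m)" unfolding pf_def by (metis polyf_power)
lemma pf_sum[simp]: "(\<And>i. i \<in> A \<Longrightarrow> pf (F i)) \<Longrightarrow> pf (\<lambda>x. \<Sum>i\<in>A. F i x)"
proof (induction A rule: infinite_finite_induct)
  case (infinite A) then show ?case by simp
next
  case empty then show ?case by simp
next
  case (insert a A) then show ?case by simp
qed

lemma pd_const[simp]: "pd c (\<lambda>x. a) = (\<lambda>x. 0)"
  by (rule ext, rule pd_from_deriv) simp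

lemma pd_coord[simp]: "pd c (\<lambda>x. x k) = (\<lambda>x. if c = k then 1 else 0)"
proof (rule ext, rule pd_from_deriv)
  fix x
  show "((\<lambda>s. (x(c := x c + s)) k) has_real_derivative (if c = k then 1 else 0)) (at 0)"
    by (cases "c = k") (auto intro!: derivative_eq_intros)
qed

lemma pd_add[simp]: "pf f \<Longrightarrow> pf g \<Longrightarrow>
   pd c (\<lambda>x. f x + g x) = (\<lambda>x. pd c f x + pd c g x)"
  by (rule ext, rule pd_from_deriv) (auto intro!: derivative_eq_intros polyf_deriv0)

lemma pd_mult[simp]: "pf f \<Longrightarrow> pf g \<Longrightarrow>
   pd c (\<lambda>x. f x * g x) = (\<lambda>x. pd c f x * g x + f x * pd c g x)"
  by (rule ext, rule pd_from_deriv) (auto intro!: derivative_eq_intros polyf_deriv0)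

lemma pd_cmult[simp]: "pf f \<Longrightarrow> pd c (\<lambda>x. a * f x) = (\<lambda>x. a * pd c f x)"
  by (rule ext, rule pd_from_deriv) (auto intro!: derivative_eq_intros polyf_deriv0)

lemma pd_multc[simp]: "pf f \<Longrightarrow> pd c (\<lambda>x. f x * a) = (\<lambda>x. pd c f x * a)"
  by (rule ext, rule pd_from_deriv) (auto intro!: derivative_eq_intros polyf_deriv0)

lemma pd_uminus[simp]: "pf f \<Longrightarrow> pd c (\<lambda>x. - f x) = (\<lambda>x. - pd c f x)"
  by (rule ext, rule pd_from_deriv) (auto intro!: derivative_eq_intros polyf_deriv0)

lemma pd_diff[simp]: "pf f \<Longrightarrow> pf g \<Longrightarrow>
   pd c (\<lambda>x. f x - g x) = (\<lambda>x. pd c f x - pd c g x)"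
  by (rule ext, rule pd_from_deriv) (auto intro!: derivative_eq_intros polyf_deriv0)

lemma pd_sum[simp]: "(\<And>i. i \<in> A \<Longrightarrow> pf (F i)) \<Longrightarrow>
   pd c (\<lambda>x. \<Sum>i\<in>A. F i x) = (\<lambda>x. \<Sum>i\<in>A. pd c (F i) x)"
proof (induction A rule: infinite_finite_induct)
  case (infinite A) then show ?case by simp
next
  case empty then show ?case by simp
next
  case (insert a A)
  then have "pd c (\<lambda>x. F a x + (\<Sum>i\<in>A. F i x)) = (\<lambda>x. pd c (F a) x + pd c (\<lambda>x. \<Sum>i\<in>A. F i x) x)"
    by (intro pd_add) auto
  with insert show ?case by simp
qed

lemma pd_comm': assumes fin: "finite n" shows "f \<in> polyf n \<Longrightarrow> pd a (pd b f) = pd b (pd a f)"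
proof (induction rule: polyf.induct)
  case (pconst c) then show ?case by simp
next
  case (pcoord k) then show ?case by simp
next
  case (padd f g) then have "pf f" "pf g" unfolding pf_def using fin by auto
  with padd show ?case by simp
next
  case (pmult f g) then have "pf f" "pf g" unfolding pf_def using fin by auto
  with pmult show ?case by (simp add: algebra_simps)
qed

lemma pd_comm: "pf f \<Longrightarrow> pd a (pd b f) = pd b (pd a f)"
  unfolding pf_def using pd_comm' by blast

lemma pd_comm_at: "pf f \<Longrightarrow> pd a (pd b f) x = pd b (pd a f) x"
  using pd_comm by metis



definition sc :: "real \<Rightarrow> (nat \<Rightarrow> real) \<Rightarrow> nat \<Rightarrow> real" where
  "sc t x = (\<lambda>i. t * x i)"

definition hw :: "nat \<Rightarrow> nat \<Rightarrow> ((nat \<Rightarrow> real) \<Rightarrow> real) \<Rightarrow> bool" where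
  "hw s r F \<longleftrightarrow> (\<forall>t>0. \<forall>x. t ^ s * F (sc t x) = t ^ r * F x)"

lemma hw_add[intro]: "hw s r F \<Longrightarrow> hw s r G \<Longrightarrow> hw s r (\<lambda>x. F x + G x)"
  unfolding hw_def by (simp add: distrib_left)
lemma hw_diff[intro]: "hw s r F \<Longrightarrow> hw s r G \<Longrightarrow> hw s r (\<lambda>x. F x - G x)"
  unfolding hw_def by (simp add: right_diff_distrib)
lemma hw_cmult[intro]: "hw s r F \<Longrightarrow> hw s r (\<lambda>x. a * F x)"
  unfolding hw_def by (metis mult.left_commute)
lemma hw_multc[intro]: "hw s r F \<Longrightarrow> hw s r (\<lambda>x. F x * a)"
  unfolding hw_def by (metis mult.assoc)
lemma hw_zero[intro]: "hw s r (\<lambda>x. 0)" unfolding hw_def by simp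
lemma hw_sum[intro]: "(\<And>i. i \<in> A \<Longrightarrow> hw s r (F i)) \<Longrightarrow> hw s r (\<lambda>x. \<Sum>i\<in>A. F i x)"
  unfolding hw_def by (simp add: sum_distrib_left)

lemma sc_upd: "t \<noteq> 0 \<Longrightarrow> (sc t x)(i := sc t x i + u) = sc t (x(i := x i + u / t))"
  by (auto simp: sc_def fun_eq_iff algebra_simps)

lemma hw_pd:
  assumes "pf F" "hw s r F"
  shows "hw (Suc s) r (pd i F)"
  unfolding hw_def
proof (intro allI impI)
  fix t :: real and x assume t: "t > 0"
  have D: "((\<lambda>w. F (x(i := x i + w))) has_real_derivative pd i F x) (at 0)"
    by (rule polyf_deriv0[OF assms(1)])
  have eq: "F ((sc t x)(i := sc t x i + u)) = (t ^ r / t ^ s) * F (x(i := x i + u / t))" for u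
  proof -
    have "t ^ s * F (sc t (x(i := x i + u / t))) = t ^ r * F (x(i := x i + u / t))"
      using assms(2) t unfolding hw_def by blast
    moreover have "(sc t x)(i := sc t x i + u) = sc t (x(i := x i + u / t))"
      by (rule sc_upd) (use t in simp)
    ultimately show ?thesis using t by (simp add: field_simps)
  qed
  have D2: "((\<lambda>u. (t ^ r / t ^ s) * F (x(i := x i + u / t))) has_real_derivative (t ^ r / t ^ s) * (pd i F x * (1 / t))) (at 0)"
  proof -
    have "((\<lambda>u. F (x(i := x i + u / t))) has_real_derivative pd i F x * (1 / t)) (at 0)"
    proof (rule DERIV_chain2[of "\<lambda>w. F (x(i := x i + w))"])
      show "((\<lambda>w. F (x(i := x i + w))) has_real_derivative pd i F x) (at (0 / t))" using D by simp
      show "((\<lambda>u. u / t) has_real_derivative 1 / t) (at 0)" using t by (auto intro!: derivative_eq_intros)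
    qed
    then show ?thesis by (rule DERIV_cmult)
  qed
  have "pd i F (sc t x) = (t ^ r / t ^ s) * (pd i F x * (1 / t))"
    using D2 unfolding eq[symmetric] by (rule pd_from_deriv)
  then show "t ^ Suc s * pd i F (sc t x) = t ^ r * pd i F x"
    using t by (simp add: field_simps)
qed

lemma hw_lower: "hw s r F \<Longrightarrow> s \<le> r \<Longrightarrow> hw 0 (r - s) F"
  unfolding hw_def
proof (intro allI impI)
  fix t :: real and x assume "\<forall>t>0. \<forall>x. t ^ s * F (sc t x) = t ^ r * F x" "s \<le> r" "t > 0"
  then have "t ^ s * F (sc t x) = t ^ s * (t ^ (r - s) * F x)"
    by (simp add: power_add[symmetric])
  then show "t ^ 0 * F (sc t x) = t ^ (r - s) * F x" using \<open>t > 0\<close> by simp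
qed

lemma lin_sc: "lin (\<lambda>i. 0) x t = sc t x"
  by (simp add: lin_def sc_def)

lemma polyf_pd_out: "f \<in> polyf n \<Longrightarrow> finite n \<Longrightarrow> c \<notin> n \<Longrightarrow> pd c f = (\<lambda>x. 0)"
  using polyf_pd_ex[of f n] by auto

lemma euler:
  assumes "f \<in> polyf n" "finite n" "hw 0 r f"
  shows "(\<Sum>i\<in>n. x i * pd i f x) = real r * f x"
proof -
  have D1: "((\<lambda>t. f (sc t x)) has_real_derivative (\<Sum>i\<in>n. x i * pd i f (sc 1 x))) (at 1)"
    using polyf_line_pd[OF assms(1,2), of "\<lambda>i. 0" x 1] by (simp add: lin_sc)
  have D2: "((\<lambda>t. t ^ r * f x) has_real_derivative real r * 1 ^ (r - 1) * f x) (at 1)"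
    by (auto intro!: derivative_eq_intros)
  have D1': "((\<lambda>t. t ^ r * f x) has_real_derivative (\<Sum>i\<in>n. x i * pd i f (sc 1 x))) (at 1)"
  proof (rule has_field_derivative_transform_within_open[OF D1, of "{0<..}"])
    show "open {0::real<..}" by simp
    show "(1::real) \<in> {0<..}" by simp
    show "\<And>t. t \<in> {0<..} \<Longrightarrow> f (sc t x) = t ^ r * f x"
      using assms(3) unfolding hw_def by auto
  qed
  have "(\<Sum>i\<in>n. x i * pd i f (sc 1 x)) = real r * 1 ^ (r - 1) * f x"
    using DERIV_unique[OF D1' D2] .
  moreover have "sc 1 x = x" by (simp add: sc_def)
  ultimately show ?thesis by simp
qed

lemma hw_small:
  assumes "pf f" "hw s r f" "r < s"
  shows "f x = 0"
proof -
  obtain n where fn: "f \<in> polyf n" "finite n" using assms(1) pf_def by blast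
  define g where "g t = t ^ (s - r) * f (sc t x)" for t :: real
  have cont: "isCont g 0"
  proof -
    have "((\<lambda>t. f (sc t x)) has_real_derivative (\<Sum>i\<in>n. x i * pd i f (sc 0 x))) (at 0)"
      using polyf_line_pd[OF fn, of "\<lambda>i. 0" x 0] by (simp add: lin_sc)
    then have "isCont (\<lambda>t. f (sc t x)) 0" by (rule DERIV_isCont)
    then show ?thesis unfolding g_def by (intro continuous_intros)
  qed
  have g0: "g 0 = 0" using assms(3) by (simp add: g_def)
  have gpos: "g t = f x" if "t > 0" for t
  proof -
    have "t ^ s * f (sc t x) = t ^ r * f x" using assms(2) that unfolding hw_def by blast
    moreover have "t ^ s = t ^ r * t ^ (s - r)" using assms(3) by (simp add: power_add[symmetric])
    ultimately show ?thesis using that by (simp add: g_def)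
  qed
  have "(g \<longlongrightarrow> 0) (at_right 0)"
    using cont g0 by (metis continuous_at_split continuous_within)
  moreover have "(g \<longlongrightarrow> f x) (at_right 0)"
  proof (rule Lim_transform_eventually[of "\<lambda>t. f x"])
    show "((\<lambda>t. f x) \<longlongrightarrow> f x) (at_right 0)" by simp
    show "\<forall>\<^sub>F t in at_right 0. f x = g t"
      by (simp add: eventually_at_right_less gpos eventually_mono[OF eventually_at_right_less])
  qed
  ultimately show ?thesis using tendsto_unique[OF trivial_limit_at_right_real] by metis
qed

lemma sep_coeffs:
  assumes "finite K" "\<forall>t>0. (\<Sum>k\<in>K. c k * t ^ k) = (0::real)" "j \<in> K"
  shows "c j = 0"
proof -
  define p where "p = (\<Sum>k\<in>K. monom (c k) k)"
  have ev: "poly p t = (\<Sum>k\<in>K. c k * t ^ k)" for t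
    unfolding p_def by (simp add: poly_sum poly_monom)
  have "p = 0"
  proof (rule ccontr)
    assume "p \<noteq> 0"
    then have "finite {t. poly p t = 0}" by (rule poly_roots_finite)
    moreover have "{0<..} \<subseteq> {t. poly p t = 0}" using assms(2) ev by auto
    ultimately have "finite {0::real<..}" by (rule finite_subset[rotated])
    then show False by (simp add: infinite_Ioi)
  qed
  then have "coeff p j = 0" by simp
  moreover have "coeff p j = c j" unfolding p_def using assms(1,3)
    by (simp add: coeff_sum coeff_monom sum.delta' cong: if_cong)
  ultimately show ?thesis by simp
qed

lemma polyf_univ: "f \<in> polyf n \<Longrightarrow> \<exists>p. \<forall>t. f (x(m := t)) = poly p t"
proof (induction rule: polyf.induct)
  case (pconst c) then show ?case by (rule_tac x="[:c:]" in exI) simp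
next
  case (pcoord k) then show ?case
    by (cases "k = m") (rule_tac x="[:0,1:]" in exI, simp, rule_tac x="[:x k:]" in exI, simp)
next
  case (padd f g) then show ?case by (metis poly_add)
next
  case (pmult f g) then show ?case by (metis poly_mult)
qed

lemma ext_half:
  assumes "pf f" "\<forall>x. x m \<ge> 0 \<longrightarrow> f x = 0"
  shows "f x = 0"
proof -
  obtain n where "f \<in> polyf n" using assms(1) pf_def by blast
  then obtain p where p: "\<forall>t. f (x(m := t)) = poly p t" using polyf_univ by blast
  have "p = 0"
  proof (rule ccontr)
    assume "p \<noteq> 0"
    then have "finite {t. poly p t = 0}" by (rule poly_roots_finite)
    moreover have "{0..} \<subseteq> {t. poly p t = 0}" using assms(2) p
      by auto (metis fun_upd_same)
    ultimately have "finite {0::real..}" by (rule finite_subset[rotated])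
    then show False by (simp add: infinite_Ici)
  qed
  then show ?thesis using p[rule_format, of "x m"] by simp
qed



lemma polyf_proj: "f \<in> polyf I \<Longrightarrow> (\<lambda>x. f (x(m := 0))) \<in> polyf I"
proof (induction rule: polyf.induct)
  case (pconst c) then show ?case by (simp add: polyf.pconst)
next
  case (pcoord k) then show ?case by (cases "k = m") (auto intro: polyf.intros)
next
  case (padd f g) then show ?case by (simp add: polyf.padd)
next
  case (pmult f g) then show ?case by (simp add: polyf.pmult)
qed

lemma pf_proj[simp]: "pf f \<Longrightarrow> pf (\<lambda>x. f (x(m := 0)))"
  unfolding pf_def using polyf_proj by blast

lemma hw_mult: "hw 0 r f \<Longrightarrow> hw 0 s g \<Longrightarrow> hw 0 (r + s) (\<lambda>x. f x * g x)"
  unfolding hw_def by (simp add: power_add mult_ac)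

lemma hw_coord: "hw 0 1 (\<lambda>x. x j)" unfolding hw_def sc_def by simp

lemma hw_proj: "hw 0 r F \<Longrightarrow> hw 0 r (\<lambda>x. F (x(m := 0)))"
proof -
  assume h: "hw 0 r F"
  have "(sc t x)(m := 0) = sc t (x(m := 0))" for t x by (auto simp: sc_def)
  then show ?thesis using h unfolding hw_def by simp
qed

lemma pd_proj: "i \<noteq> m \<Longrightarrow> pd i (\<lambda>x. F (x(m := 0))) x = pd i F (x(m := 0))"
proof -
  assume "i \<noteq> m"
  then have "(x(i := x i + s))(m := 0) = (x(m := 0))(i := (x(m := 0)) i + s)" for s
    by (auto simp: fun_eq_iff)
  then show ?thesis unfolding pd_def by simp
qed

lemma indep_pd: "(\<And>x. F x = F (x(m := 0))) \<Longrightarrow> i \<noteq> m \<Longrightarrow> pd i F x = pd i F (x(m := 0))"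
proof -
  assume F: "\<And>x. F x = F (x(m := 0))" and i: "i \<noteq> m"
  have "F = (\<lambda>x. F (x(m := 0)))" using F by (auto simp: fun_eq_iff)
  then have "pd i F x = pd i (\<lambda>x. F (x(m := 0))) x" by simp
  also have "\<dots> = pd i F (x(m := 0))" by (rule pd_proj[OF i])
  finally show ?thesis .
qed

lemma indep_pd_m: "(\<And>x. F x = F (x(m := 0))) \<Longrightarrow> pd m F x = 0"
proof -
  assume F: "\<And>x. F x = F (x(m := 0))"
  have "(\<lambda>s. F (x(m := x m + s))) = (\<lambda>s. F (x(m := 0)))" using F by (metis fun_upd_upd)
  then have "((\<lambda>s. F (x(m := x m + s))) has_real_derivative 0) (at 0)" by simp
  then show ?thesis by (rule pd_from_deriv)
qed

lemma sum_last: fixes n :: nat shows "n \<ge> 1 \<Longrightarrow> (\<Sum>j=1..n. f j) = (\<Sum>j=1..n-1. f j) + (f n :: real)"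
proof -
  assume "n \<ge> 1"
  then obtain m where "n = Suc m" by (cases n) auto
  then show ?thesis by (simp add: sum.cl_ivl_Suc)
qed

lemma ind_mult1[simp]: "(if P then 1 else 0) * (a::real) = (if P then a else 0)" by simp
lemma ind_mult2[simp]: "(a::real) * (if P then 1 else 0) = (if P then a else 0)" by simp

lemma sum_if_c[simp]: "finite A \<Longrightarrow> (\<Sum>j\<in>A. c * (if i = j then f j else 0)) = (if i \<in> A then c * f i else (0::real))"
  by (simp add: sum_distrib_left[symmetric])

lemma pd_nx2: "i \<in> {1..n-1} \<Longrightarrow> pd i (\<lambda>x. \<Sum>j=1..n-1. x j * x j) = (\<lambda>x. 2 * x i)"
  by (simp add: fun_eq_iff sum_distrib_left[symmetric])

lemma lap_prod:
  assumes g: "pf g"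
  shows "(\<Sum>i=1..n-1. pd i (pd i (\<lambda>x. (\<Sum>j=1..n-1. x j * x j) * g x)) x)
     = (\<Sum>j=1..n-1. x j * x j) * (\<Sum>i=1..n-1. pd i (pd i g) x) + 4 * (\<Sum>i=1..n-1. x i * pd i g x) + 2 * real (n - 1) * g x"
proof -
  have e1: "pd i (\<lambda>x. (\<Sum>j=1..n-1. x j * x j) * g x) = (\<lambda>x. 2 * x i * g x + (\<Sum>j=1..n-1. x j * x j) * pd i g x)"
    if "i \<in> {1..n-1}" for i
    using that g by (simp add: fun_eq_iff pd_nx2)
  have e2: "pd i (pd i (\<lambda>x. (\<Sum>j=1..n-1. x j * x j) * g x)) x = 2 * g x + 4 * (x i * pd i g x) + (\<Sum>j=1..n-1. x j * x j) * pd i (pd i g) x"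
    if "i \<in> {1..n-1}" for i
    using that g unfolding e1[OF that] by (simp add: algebra_simps)
  have "(\<Sum>i=1..n-1. pd i (pd i (\<lambda>x. (\<Sum>j=1..n-1. x j * x j) * g x)) x)
      = (\<Sum>i=1..n-1. 2 * g x + 4 * (x i * pd i g x) + (\<Sum>j=1..n-1. x j * x j) * pd i (pd i g) x)"
    by (rule sum.cong[OF refl]) (rule e2, simp)
  also have "\<dots> = (\<Sum>j=1..n-1. x j * x j) * (\<Sum>i=1..n-1. pd i (pd i g) x) + 4 * (\<Sum>i=1..n-1. x i * pd i g x) + 2 * real (n - 1) * g x"
    by (simp add: sum.distrib sum_distrib_left)
  finally show ?thesis .
qed

lemma descent:
  fixes n :: nat
  assumes n1: "n \<ge> 1"
  shows "\<forall>f \<mu>. f \<in> polyf {1..n} \<longrightarrow> hw 0 r f \<longrightarrow> (\<forall>x. f x = f (x(n := 0))) \<longrightarrow> \<mu> > 0 \<longrightarrow>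
    (\<forall>x. (\<Sum>j=1..n-1. x j * x j) * (\<Sum>i=1..n-1. pd i (pd i f) x) = - \<mu> * f x) \<longrightarrow> (\<forall>x. f x = 0)"
proof (induction r rule: less_induct)
  case (less r)
  show ?case
  proof (intro allI impI)
    fix f :: "(nat \<Rightarrow> real) \<Rightarrow> real" and \<mu> :: real and x
    assume fp: "f \<in> polyf {1..n}" and fh: "hw 0 r f" and fi: "\<forall>x. f x = f (x(n := 0))" and mu: "\<mu> > 0"
      and eq: "\<forall>x. (\<Sum>j=1..n-1. x j * x j) * (\<Sum>i=1..n-1. pd i (pd i f) x) = - \<mu> * f x"
    have pff: "pf f" using fp pf_def by blast
    define g where "g = (\<lambda>x. \<Sum>i=1..n-1. pd i (pd i f) x)"
    have gp: "g \<in> polyf {1..n}" unfolding g_def using fp by (intro polyf_sum) auto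
    have pfg: "pf g" using gp pf_def by blast
    have gh2: "hw 2 r g" unfolding g_def
      by (intro hw_sum) (metis hw_pd pf_pd fh One_nat_def Suc_1 pff)
    have fi': "\<And>x. f x = f (x(n := 0))" using fi by blast
    have gi: "g x = g (x(n := 0))" for x
    proof -
      have "pd i (pd i f) x = pd i (pd i f) (x(n := 0))" if "i \<in> {1..n-1}" for i
      proof -
        have ni: "i \<noteq> n" using that n1 by auto
        have "\<And>x. pd i f x = pd i f (x(n := 0))" using indep_pd[where F=f and m=n, OF fi' ni] .
        then show ?thesis using indep_pd[where F="pd i f" and m=n] ni by blast
      qed
      then show ?thesis unfolding g_def by (intro sum.cong) auto
    qed
    show "f x = 0"
    proof (cases "r < 2")
      case True
      then have "\<And>x. g x = 0" using hw_small[OF pfg gh2] by blast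
      then have "- \<mu> * f x = 0" using eq[rule_format, of x] unfolding g_def by simp
      then show ?thesis using mu by simp
    next
      case False
      then have gh: "hw 0 (r - 2) g" using hw_lower[OF gh2] by simp
      have eul: "(\<Sum>i=1..n-1. y i * pd i g y) = real (r - 2) * g y" for y
      proof -
        have "(\<Sum>i=1..n. y i * pd i g y) = real (r - 2) * g y" by (rule euler[OF gp _ gh]) simp
        moreover have "pd n g y = 0" using indep_pd_m[of g n y] gi by blast
        ultimately show ?thesis using sum_last[OF n1, of "\<lambda>i. y i * pd i g y"] by simp
      qed
      have Heq: "(\<lambda>x. (\<Sum>j=1..n-1. x j * x j) * g x) = (\<lambda>x. - \<mu> * f x)"
        using eq unfolding g_def by (simp add: fun_eq_iff)
      have "(\<Sum>i=1..n-1. pd i (pd i (\<lambda>x. (\<Sum>j=1..n-1. x j * x j) * g x)) y) = - \<mu> * g y" for y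
        unfolding Heq using pff by (simp add: g_def sum_distrib_left)
      then have geq: "\<forall>y. (\<Sum>j=1..n-1. y j * y j) * (\<Sum>i=1..n-1. pd i (pd i g) y) = - (\<mu> + 4 * real (r - 2) + 2 * real (n - 1)) * g y"
        using lap_prod[OF pfg] eul by (simp add: algebra_simps)
      have "r - 2 < r" using False by simp
      moreover have "\<mu> + 4 * real (r - 2) + 2 * real (n - 1) > 0" using mu by simp
      ultimately have "\<forall>y. g y = 0" using less.IH gp gh gi geq by blast
      then have "- \<mu> * f x = 0" using eq[rule_format, of x] unfolding g_def by simp
      then show ?thesis using mu by simp
    qed
  qed
qed



definition dl :: "nat \<Rightarrow> nat \<Rightarrow> real" where "dl a b = (if a = b then 1 else 0)"

lemma dl_sym: "dl a b = dl b a" unfolding dl_def by auto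
lemma dl_same[simp]: "dl a a = 1" unfolding dl_def by auto
lemma sum_dl: "finite A \<Longrightarrow> (\<Sum>d\<in>A. f d * dl a d) = (if a \<in> A then f a else 0)"
proof -
  assume "finite A"
  have "(\<Sum>d\<in>A. f d * dl a d) = (\<Sum>d\<in>A. if a = d then f d else 0)" by (rule sum.cong) (auto simp: dl_def)
  then show ?thesis using \<open>finite A\<close> by (simp add: sum.delta)
qed
lemma sum_dl': "finite A \<Longrightarrow> (\<Sum>d\<in>A. f d * dl d a) = (if a \<in> A then f a else 0)"
  using sum_dl[of A f a] by (simp add: dl_sym)

lemma pf_divc[simp]: "pf f \<Longrightarrow> pf (\<lambda>x. f x / a)"
  using pf_multc[of f "1/a"] by simp
lemma pd_divc[simp]: "pf f \<Longrightarrow> pd c (\<lambda>x. f x / a) = (\<lambda>x. pd c f x / a)"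
  using pd_multc[of f c "1/a"] by simp

lemma bd_tan:
  assumes "pf F" "\<And>x. x n = 0 \<Longrightarrow> F x = 0" "l \<noteq> n" "y n = 0"
  shows "pd l F y = 0"
proof -
  have "(\<lambda>s. F (y(l := y l + s))) = (\<lambda>s. 0)" using assms(2,3,4) by auto
  then have "((\<lambda>s. F (y(l := y l + s))) has_real_derivative 0) (at 0)" by simp
  then show ?thesis by (rule pd_from_deriv)
qed

lemma bd_tan2:
  assumes "pf F" "\<And>x. x n = 0 \<Longrightarrow> F x = 0" "l \<noteq> n" "m \<noteq> n" "y n = 0"
  shows "pd m (pd l F) y = 0"
proof (rule bd_tan[of _ n])
  show "pf (pd l F)" using assms(1) by simp
  show "\<And>x. x n = 0 \<Longrightarrow> pd l F x = 0" using bd_tan[OF assms(1,2,3)] by blast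
qed (use assms in auto)

lemma hw_pd0: "pf F \<Longrightarrow> hw 0 r F \<Longrightarrow> r \<ge> 1 \<Longrightarrow> hw 0 (r - 1) (pd i F)"
  using hw_lower[OF hw_pd[of F 0 r i]] by simp

locale core =
  fixes n k :: nat and G :: "nat \<Rightarrow> nat \<Rightarrow> (nat \<Rightarrow> real) \<Rightarrow> real"
  assumes n4: "n \<ge> 4" and k1: "k \<ge> 1"
    and polyG: "\<And>a b. G a b \<in> polyf {1..n}"
    and symG: "\<And>a b. a \<in> {1..n} \<Longrightarrow> b \<in> {1..n} \<Longrightarrow> G a b = G b a"
    and trG: "\<And>x. (\<Sum>a=1..n. G a a x) = 0"
    and Gn: "\<And>a. a \<in> {1..n} \<Longrightarrow> G a n = (\<lambda>x. 0)"
    and W: "\<And>a b c d x. a \<in> {1..n} \<Longrightarrow> b \<in> {1..n} \<Longrightarrow> c \<in> {1..n} \<Longrightarrow> d \<in> {1..n} \<Longrightarrow> weyl n G a b c d x = 0"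
    and bdn: "\<And>i j x. i \<in> {1..n-1} \<Longrightarrow> j \<in> {1..n-1} \<Longrightarrow> x n = 0 \<Longrightarrow> pd n (G i j) x = 0"
    and bdx: "\<And>i x. i \<in> {1..n-1} \<Longrightarrow> x n = 0 \<Longrightarrow> (\<Sum>j=1..n-1. x j * G i j x) = 0"
    and hom: "\<And>a b. hw 0 k (G a b)"
begin

lemma pfG[simp]: "pf (G a b)" using polyG pf_def by blast

definition dv :: "nat \<Rightarrow> (nat \<Rightarrow> real) \<Rightarrow> real" where
  "dv a = (\<lambda>x. \<Sum>e=1..n. pd e (G a e) x)"
definition sg :: "(nat \<Rightarrow> real) \<Rightarrow> real" where
  "sg = (\<lambda>x. \<Sum>e=1..n. pd e (dv e) x)"
definition lap :: "((nat \<Rightarrow> real) \<Rightarrow> real) \<Rightarrow> (nat \<Rightarrow> real) \<Rightarrow> real" where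
  "lap F = (\<lambda>x. \<Sum>e=1..n. pd e (pd e F) x)"
definition Af :: "nat \<Rightarrow> nat \<Rightarrow> (nat \<Rightarrow> real) \<Rightarrow> real" where
  "Af a c = (\<lambda>x. schouten n G a c x)"

lemma pf_dv[simp]: "pf (dv a)" unfolding dv_def by simp
lemma pf_sg[simp]: "pf sg" unfolding sg_def by simp
lemma pf_lap[simp]: "pf F \<Longrightarrow> pf (lap F)" unfolding lap_def by simp

lemma n1: "real n - 1 \<noteq> 0" "real n - 2 \<noteq> 0" "real n - 3 \<noteq> 0" using n4 by auto

lemma Af_eq: "Af a c = (\<lambda>x. pd c (dv a) x + pd a (dv c) x - lap (G a c) x - sg x / (real n - 1) * dl a c)"
proof -
  have 1: "pd c (dv a) x = (\<Sum>e=1..n. pd c (pd e (G a e)) x)" for c a x unfolding dv_def by simp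
  have 2: "sg x = (\<Sum>e=1..n. \<Sum>f=1..n. pd e (pd f (G e f)) x)" for x unfolding sg_def dv_def by simp
  show ?thesis unfolding Af_def schouten_def 1 2 lap_def dl_def by (simp add: fun_eq_iff)
qed

lemma pf_Af[simp]: "pf (Af a c)" unfolding Af_eq by simp

lemma Af_sym: "a \<in> {1..n} \<Longrightarrow> c \<in> {1..n} \<Longrightarrow> Af a c = Af c a"
proof -
  assume "a \<in> {1..n}" "c \<in> {1..n}"
  then have "G a c = G c a" by (rule symG)
  then show ?thesis unfolding Af_eq by (simp add: dl_sym add.commute)
qed

lemma pd_Af: "pd b (Af a c) = (\<lambda>x. pd b (pd c (dv a)) x + pd b (pd a (dv c)) x - pd b (lap (G a c)) x - pd b sg x / (real n - 1) * dl a c)"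
  unfolding Af_eq by simp

lemma pd_lap: "pf F \<Longrightarrow> pd b (lap F) = lap (pd b F)"
  unfolding lap_def by (simp add: pd_comm[of "pd _ F"] pd_comm[of F])

lemma lap_dv: "lap (dv a) x = (\<Sum>d=1..n. pd d (lap (G a d)) x)"
proof -
  have "lap (dv a) x = (\<Sum>e=1..n. \<Sum>d=1..n. pd e (pd e (pd d (G a d))) x)"
    unfolding lap_def dv_def by simp
  also have "\<dots> = (\<Sum>d=1..n. \<Sum>e=1..n. pd e (pd e (pd d (G a d))) x)" by (rule sum.swap)
  also have "\<dots> = (\<Sum>d=1..n. pd d (lap (G a d)) x)"
    unfolding pd_lap[OF pfG] unfolding lap_def
    by (simp add: pd_comm[of "G _ _"] pd_comm[of "pd _ (G _ _)"])
  finally show ?thesis .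
qed

lemma divA: "a \<in> {1..n} \<Longrightarrow> (\<Sum>d=1..n. pd d (Af a d) x) = (1 - 1 / (real n - 1)) * pd a sg x"
proof -
  assume a: "a \<in> {1..n}"
  have s1: "(\<Sum>d=1..n. pd d (pd d (dv a)) x) = lap (dv a) x" unfolding lap_def ..
  have s2: "(\<Sum>d=1..n. pd d (pd a (dv d)) x) = pd a sg x"
    unfolding sg_def by (simp add: pd_comm[of "dv _"])
  have s4: "(\<Sum>d=1..n. pd d sg x / (real n - 1) * dl a d) = pd a sg x / (real n - 1)"
    using a by (simp add: sum_divide_distrib[symmetric] sum_dl)
  have "(\<Sum>d=1..n. pd d (Af a d) x) = (\<Sum>d=1..n. pd d (pd d (dv a)) x) + (\<Sum>d=1..n. pd d (pd a (dv d)) x)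
     - (\<Sum>d=1..n. pd d (lap (G a d)) x) - (\<Sum>d=1..n. pd d sg x / (real n - 1) * dl a d)"
    unfolding pd_Af by (simp add: sum.distrib sum_subtractf)
  also have "\<dots> = (1 - 1 / (real n - 1)) * pd a sg x"
    unfolding s1 s2 s4 lap_dv by (simp add: algebra_simps)
  finally show ?thesis .
qed

lemma pd3_comm: "pf F \<Longrightarrow> pd d (pd b (pd c F)) = pd b (pd c (pd d F))"
  by (metis pd_comm pf_pd)

lemma weyl_fun: "(\<lambda>x. weyl n G a b c d x) = (\<lambda>x. pd b (pd d (G a c)) x - pd b (pd c (G a d)) x + pd a (pd c (G b d)) x - pd a (pd d (G b c)) x
   + 1 / (real n - 2) * (Af a c x * dl b d - Af a d x * dl b c + Af b d x * dl a c - Af b c x * dl a d))"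
  by (simp add: weyl_def Af_def dl_def fun_eq_iff)

lemma cotton:
  assumes a: "a \<in> {1..n}" and b: "b \<in> {1..n}" and c: "c \<in> {1..n}"
  shows "pd b (Af a c) x = pd a (Af b c) x"
proof -
  let ?T = "\<lambda>d. pd d (pd b (pd d (G a c))) x - pd d (pd b (pd c (G a d))) x + pd d (pd a (pd c (G b d))) x - pd d (pd a (pd d (G b c))) x
   + 1 / (real n - 2) * (pd d (Af a c) x * dl b d - pd d (Af a d) x * dl b c + pd d (Af b d) x * dl a c - pd d (Af b c) x * dl a d)"
  have T: "pd d (\<lambda>x. weyl n G a b c d x) x = ?T d" for d
    unfolding weyl_fun by simp
  have Z: "pd d (\<lambda>x. weyl n G a b c d x) x = 0" if "d \<in> {1..n}" for d
  proof -
    have "(\<lambda>x. weyl n G a b c d x) = (\<lambda>x. 0)" using W[OF a b c that] by (simp add: fun_eq_iff)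
    then show ?thesis by simp
  qed
  have sum0: "(\<Sum>d=1..n. ?T d) = 0" using Z T by (simp add: sum.neutral)
  have S1: "(\<Sum>d=1..n. pd d (pd b (pd d (G a c))) x) = pd b (lap (G a c)) x"
    unfolding lap_def by (simp add: pd_comm[of "pd _ (G _ _)"])
  have S4: "(\<Sum>d=1..n. pd d (pd a (pd d (G b c))) x) = pd a (lap (G b c)) x"
    unfolding lap_def by (simp add: pd_comm[of "pd _ (G _ _)"])
  have S2: "(\<Sum>d=1..n. pd d (pd b (pd c (G a d))) x) = pd b (pd c (dv a)) x"
    unfolding dv_def by (simp, rule sum.cong[OF refl], metis pd3_comm pfG)
  have S3: "(\<Sum>d=1..n. pd d (pd a (pd c (G b d))) x) = pd a (pd c (dv b)) x"
    unfolding dv_def by (simp, rule sum.cong[OF refl], metis pd3_comm pfG)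
  have S5: "(\<Sum>d=1..n. pd d (Af a c) x * dl b d) = pd b (Af a c) x" using b by (simp add: sum_dl)
  have S8: "(\<Sum>d=1..n. pd d (Af b c) x * dl a d) = pd a (Af b c) x" using a by (simp add: sum_dl)
  have S6: "(\<Sum>d=1..n. pd d (Af a d) x * dl b c) = (1 - 1 / (real n - 1)) * pd a sg x * dl b c"
    using divA[OF a, of x] by (simp add: sum_distrib_right[symmetric])
  have S7: "(\<Sum>d=1..n. pd d (Af b d) x * dl a c) = (1 - 1 / (real n - 1)) * pd b sg x * dl a c"
    using divA[OF b, of x] by (simp add: sum_distrib_right[symmetric])
  have E: "(\<Sum>d=1..n. ?T d) = (\<Sum>d=1..n. pd d (pd b (pd d (G a c))) x) - (\<Sum>d=1..n. pd d (pd b (pd c (G a d))) x)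
     + (\<Sum>d=1..n. pd d (pd a (pd c (G b d))) x) - (\<Sum>d=1..n. pd d (pd a (pd d (G b c))) x)
     + 1 / (real n - 2) * ((\<Sum>d=1..n. pd d (Af a c) x * dl b d) - (\<Sum>d=1..n. pd d (Af a d) x * dl b c)
        + (\<Sum>d=1..n. pd d (Af b d) x * dl a c) - (\<Sum>d=1..n. pd d (Af b c) x * dl a d))"
    by (simp only: sum.distrib sum_subtractf sum_distrib_left[symmetric])
  have PA: "pd b (Af a c) x = pd b (pd c (dv a)) x + pd b (pd a (dv c)) x - pd b (lap (G a c)) x - pd b sg x / (real n - 1) * dl a c"
    by (simp add: pd_Af)
  have PB: "pd a (Af b c) x = pd a (pd c (dv b)) x + pd a (pd b (dv c)) x - pd a (lap (G b c)) x - pd a sg x / (real n - 1) * dl b c"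
    by (simp add: pd_Af)
  have CC: "pd b (pd a (dv c)) x = pd a (pd b (dv c)) x" by (simp add: pd_comm)
  define X where "X = pd b (Af a c) x - pd a (Af b c) x"
  have h1: "(\<Sum>d=1..n. pd d (pd b (pd d (G a c))) x) - (\<Sum>d=1..n. pd d (pd b (pd c (G a d))) x)
     + (\<Sum>d=1..n. pd d (pd a (pd c (G b d))) x) - (\<Sum>d=1..n. pd d (pd a (pd d (G b c))) x)
     = - X - pd b sg x / (real n - 1) * dl a c + pd a sg x / (real n - 1) * dl b c"
    unfolding S1 S2 S3 S4 X_def using PA PB CC by linarith
  have K: "(1 - 1 / (real n - 1)) / (real n - 2) = 1 / (real n - 1)"
  proof -
    have "1 - 1 / (real n - 1) = (real n - 2) / (real n - 1)" using n1 by (simp add: field_simps)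
    then show ?thesis using n1 by simp
  qed
  have h2: "1 / (real n - 2) * ((\<Sum>d=1..n. pd d (Af a c) x * dl b d) - (\<Sum>d=1..n. pd d (Af a d) x * dl b c)
        + (\<Sum>d=1..n. pd d (Af b d) x * dl a c) - (\<Sum>d=1..n. pd d (Af b c) x * dl a d))
     = X / (real n - 2) - pd a sg x / (real n - 1) * dl b c + pd b sg x / (real n - 1) * dl a c"
  proof -
    have "1 / (real n - 2) * ((\<Sum>d=1..n. pd d (Af a c) x * dl b d) - (\<Sum>d=1..n. pd d (Af a d) x * dl b c)
        + (\<Sum>d=1..n. pd d (Af b d) x * dl a c) - (\<Sum>d=1..n. pd d (Af b c) x * dl a d))
      = X / (real n - 2) - ((1 - 1 / (real n - 1)) / (real n - 2)) * (pd a sg x * dl b c)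
         + ((1 - 1 / (real n - 1)) / (real n - 2)) * (pd b sg x * dl a c)"
      unfolding S5 S6 S7 S8 X_def by (simp add: algebra_simps add_divide_distrib diff_divide_distrib)
    then show ?thesis unfolding K by simp
  qed
  have key: "- X + X / (real n - 2) = 0"
    using sum0 h1 h2 unfolding E by linarith
  then have "X * (real n - 3) = 0" using n1 by (simp add: field_simps)
  then have "X = 0" using n1 by simp
  then show ?thesis unfolding X_def by simp
qed

lemma polyG_pd[simp]: "pd a (G b c) \<in> polyf {1..n}" using polyG by simp
lemma polyG_pd2[simp]: "pd a (pd d (G b c)) \<in> polyf {1..n}" using polyG by simp

lemma euler_bd:
  assumes "F \<in> polyf {1..n}" "hw 0 r F" "y n = 0"
  shows "(\<Sum>j=1..n-1. y j * pd j F y) = real r * F y"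
  using euler[OF assms(1) _ assms(2), of y] sum_last[of n "\<lambda>j. y j * pd j F y"] n4 assms(3) by simp

lemma hwG1: "hw 0 (k - 1) (pd a (G b c))" using hw_pd0[OF pfG hom k1] .

definition P :: "nat \<Rightarrow> (nat \<Rightarrow> real) \<Rightarrow> real" where
  "P i = (\<lambda>x. \<Sum>j=1..n-1. x j * G i j x)"

lemma pf_P[simp]: "pf (P i)" unfolding P_def by simp

lemma dP: "l \<in> {1..n-1} \<Longrightarrow> pd l (P i) x = G i l x + (\<Sum>j=1..n-1. x j * pd l (G i j) x)"
proof -
  assume l: "l \<in> {1..n-1}"
  have "pd l (P i) x = (\<Sum>j=1..n-1. (if l = j then 1 else 0) * G i j x + x j * pd l (G i j) x)"
    unfolding P_def by simp
  also have "\<dots> = G i l x + (\<Sum>j=1..n-1. x j * pd l (G i j) x)"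
    using l by (simp add: sum.distrib)
  finally show ?thesis .
qed

lemma ddP: "l \<in> {1..n-1} \<Longrightarrow> m \<in> {1..n-1} \<Longrightarrow>
   pd m (pd l (P i)) x = pd m (G i l) x + pd l (G i m) x + (\<Sum>j=1..n-1. x j * pd m (pd l (G i j)) x)"
proof -
  assume l: "l \<in> {1..n-1}" and m: "m \<in> {1..n-1}"
  have e: "pd l (P i) = (\<lambda>x. G i l x + (\<Sum>j=1..n-1. x j * pd l (G i j) x))" using dP[OF l] by auto
  have "pd m (pd l (P i)) x = pd m (G i l) x + (\<Sum>j=1..n-1. (if m = j then 1 else 0) * pd l (G i j) x + x j * pd m (pd l (G i j)) x)"
    unfolding e by simp
  also have "\<dots> = pd m (G i l) x + pd l (G i m) x + (\<Sum>j=1..n-1. x j * pd m (pd l (G i j)) x)"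
    using m by (simp add: sum.distrib)
  finally show ?thesis .
qed

lemma P_bd: "i \<in> {1..n-1} \<Longrightarrow> x n = 0 \<Longrightarrow> P i x = 0" unfolding P_def using bdx by simp

lemma B1: "i \<in> {1..n-1} \<Longrightarrow> l \<in> {1..n-1} \<Longrightarrow> y n = 0 \<Longrightarrow> (\<Sum>j=1..n-1. y j * pd l (G i j) y) = - G i l y"
proof -
  assume i: "i \<in> {1..n-1}" and l: "l \<in> {1..n-1}" and y: "y n = 0"
  have "pd l (P i) y = 0" by (rule bd_tan[of _ n]) (use i l y P_bd in auto)
  then show ?thesis using dP[OF l] by simp
qed

lemma B2: "i \<in> {1..n-1} \<Longrightarrow> l \<in> {1..n-1} \<Longrightarrow> m \<in> {1..n-1} \<Longrightarrow> y n = 0 \<Longrightarrow>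
   (\<Sum>j=1..n-1. y j * pd m (pd l (G i j)) y) = - pd m (G i l) y - pd l (G i m) y"
proof -
  assume i: "i \<in> {1..n-1}" and l: "l \<in> {1..n-1}" and m: "m \<in> {1..n-1}" and y: "y n = 0"
  have "pd m (pd l (P i)) y = 0" by (rule bd_tan2[of _ n]) (use i l m y P_bd in auto)
  then show ?thesis using ddP[OF l m] by simp
qed

lemma symG': "a \<in> {1..n-1} \<Longrightarrow> b \<in> {1..n-1} \<Longrightarrow> G a b = G b a"
  using symG by auto

lemma kk: "real (k - 1) = real k - 1" using k1 by simp

lemma euler_G: "y n = 0 \<Longrightarrow> (\<Sum>l=1..n-1. y l * pd l (G a b) y) = real k * G a b y"
  using euler_bd[OF polyG hom] by simp

lemma euler_pdG: "y n = 0 \<Longrightarrow> (\<Sum>l=1..n-1. y l * pd l (pd j (G a b)) y) = (real k - 1) * pd j (G a b) y"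
  using euler_bd[OF polyG_pd hwG1] kk by simp

lemma R2:
  assumes i: "i \<in> {1..n-1}" and q: "q \<in> {1..n-1}" and y: "y n = 0"
  shows "(\<Sum>j=1..n-1. \<Sum>l=1..n-1. y j * y l * (pd j (pd l (G i q)) y - pd j (pd q (G i l)) y
            + pd i (pd q (G j l)) y - pd i (pd l (G j q)) y)) = real k * (real k + 1) * G i q y"
proof -
  define T where "T = {1..n-1}"
  have t1: "(\<Sum>j\<in>T. \<Sum>l\<in>T. y j * y l * pd j (pd l (G i q)) y) = (real k - 1) * real k * G i q y"
  proof -
    have "(\<Sum>j\<in>T. \<Sum>l\<in>T. y j * y l * pd j (pd l (G i q)) y) = (\<Sum>j\<in>T. y j * (\<Sum>l\<in>T. y l * pd l (pd j (G i q)) y))"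
      by (simp add: sum_distrib_left pd_comm[of "G i q"] mult.assoc)
    also have "\<dots> = (\<Sum>j\<in>T. y j * ((real k - 1) * pd j (G i q) y))"
      unfolding T_def using euler_pdG[where y=y, OF y] by simp
    also have "\<dots> = (real k - 1) * (\<Sum>j\<in>T. y j * pd j (G i q) y)"
      by (simp add: sum_distrib_left mult.left_commute)
    also have "\<dots> = (real k - 1) * real k * G i q y"
      unfolding T_def using euler_G[where y=y, OF y] by simp
    finally show ?thesis .
  qed
  have t2: "(\<Sum>j\<in>T. \<Sum>l\<in>T. y j * y l * pd j (pd q (G i l)) y) = - real k * G i q y + G i q y"
  proof -
    have "(\<Sum>j\<in>T. \<Sum>l\<in>T. y j * y l * pd j (pd q (G i l)) y) = (\<Sum>j\<in>T. y j * (\<Sum>l\<in>T. y l * pd j (pd q (G i l)) y))"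
      by (simp add: sum_distrib_left mult.assoc)
    also have "\<dots> = (\<Sum>j\<in>T. y j * (- pd j (G i q) y - pd q (G i j) y))"
      by (rule sum.cong[OF refl]) (use B2[where y=y, OF i q _ y] in \<open>simp add: T_def\<close>)
    also have "\<dots> = - (\<Sum>j\<in>T. y j * pd j (G i q) y) - (\<Sum>j\<in>T. y j * pd q (G i j) y)"
      by (simp add: algebra_simps sum_subtractf sum_negf)
    also have "\<dots> = - real k * G i q y + G i q y"
      unfolding T_def using euler_G[where y=y, OF y] B1[where y=y, OF i q y] by simp
    finally show ?thesis .
  qed
  have t3: "(\<Sum>j\<in>T. \<Sum>l\<in>T. y j * y l * pd i (pd q (G j l)) y) = 2 * G i q y"
  proof -
    have "(\<Sum>j\<in>T. \<Sum>l\<in>T. y j * y l * pd i (pd q (G j l)) y) = (\<Sum>j\<in>T. y j * (\<Sum>l\<in>T. y l * pd i (pd q (G j l)) y))"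
      by (simp add: sum_distrib_left mult.assoc)
    also have "\<dots> = (\<Sum>j\<in>T. y j * (- pd i (G j q) y - pd q (G j i) y))"
      by (rule sum.cong[OF refl]) (use B2[where y=y, OF _ q i y] in \<open>simp add: T_def\<close>)
    also have "\<dots> = (\<Sum>j\<in>T. y j * (- pd i (G q j) y - pd q (G i j) y))"
      by (rule sum.cong[OF refl]) (use symG' i q in \<open>simp add: T_def\<close>)
    also have "\<dots> = - (\<Sum>j\<in>T. y j * pd i (G q j) y) - (\<Sum>j\<in>T. y j * pd q (G i j) y)"
      by (simp add: algebra_simps sum_subtractf sum_negf)
    also have "\<dots> = G q i y + G i q y"
      unfolding T_def using B1[where y=y, OF q i y] B1[where y=y, OF i q y] by simp
    also have "\<dots> = 2 * G i q y" using symG'[OF i q] by simp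
    finally show ?thesis .
  qed
  have t4: "(\<Sum>j\<in>T. \<Sum>l\<in>T. y j * y l * pd i (pd l (G j q)) y) = G i q y - real k * G i q y"
  proof -
    have "(\<Sum>j\<in>T. \<Sum>l\<in>T. y j * y l * pd i (pd l (G j q)) y) = (\<Sum>l\<in>T. \<Sum>j\<in>T. y j * y l * pd i (pd l (G j q)) y)"
      by (rule sum.swap)
    also have "\<dots> = (\<Sum>l\<in>T. y l * (\<Sum>j\<in>T. y j * pd i (pd l (G q j)) y))"
      by (rule sum.cong[OF refl]) (use symG' q in \<open>simp add: T_def sum_distrib_left mult_ac\<close>)
    also have "\<dots> = (\<Sum>l\<in>T. y l * (- pd i (G q l) y - pd l (G q i) y))"
      by (rule sum.cong[OF refl]) (use B2[where y=y, OF q _ i y] in \<open>simp add: T_def\<close>)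
    also have "\<dots> = - (\<Sum>l\<in>T. y l * pd i (G q l) y) - (\<Sum>l\<in>T. y l * pd l (G q i) y)"
      by (simp add: algebra_simps sum_subtractf sum_negf)
    also have "\<dots> = G q i y - real k * G q i y"
      unfolding T_def using euler_G[where y=y, OF y] B1[where y=y, OF q i y] by simp
    also have "\<dots> = G i q y - real k * G i q y" using symG'[OF i q] by simp
    finally show ?thesis .
  qed
  have "(\<Sum>j=1..n-1. \<Sum>l=1..n-1. y j * y l * (pd j (pd l (G i q)) y - pd j (pd q (G i l)) y
            + pd i (pd q (G j l)) y - pd i (pd l (G j q)) y))
      = (\<Sum>j\<in>T. \<Sum>l\<in>T. y j * y l * pd j (pd l (G i q)) y) - (\<Sum>j\<in>T. \<Sum>l\<in>T. y j * y l * pd j (pd q (G i l)) y)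
        + (\<Sum>j\<in>T. \<Sum>l\<in>T. y j * y l * pd i (pd q (G j l)) y) - (\<Sum>j\<in>T. \<Sum>l\<in>T. y j * y l * pd i (pd l (G j q)) y)"
    unfolding T_def by (simp add: algebra_simps sum.distrib sum_subtractf)
  also have "\<dots> = real k * (real k + 1) * G i q y"
    unfolding t1 t2 t3 t4 by (simp add: algebra_simps)
  finally show ?thesis .
qed

definition nx2 :: "(nat \<Rightarrow> real) \<Rightarrow> real" where "nx2 y = (\<Sum>j=1..n-1. y j * y j)"
definition Ax :: "nat \<Rightarrow> (nat \<Rightarrow> real) \<Rightarrow> real" where "Ax i y = (\<Sum>l=1..n-1. y l * Af i l y)"
definition xAx :: "(nat \<Rightarrow> real) \<Rightarrow> real" where "xAx y = (\<Sum>j=1..n-1. \<Sum>l=1..n-1. y j * y l * Af j l y)"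

lemma Af_sym': "a \<in> {1..n-1} \<Longrightarrow> c \<in> {1..n-1} \<Longrightarrow> Af a c = Af c a"
  using Af_sym by auto

lemma Wcomp:
  assumes i: "i \<in> {1..n-1}" and j: "j \<in> {1..n-1}" and q: "q \<in> {1..n-1}" and l: "l \<in> {1..n-1}"
  shows "pd j (pd l (G i q)) y - pd j (pd q (G i l)) y + pd i (pd q (G j l)) y - pd i (pd l (G j q)) y
    = - 1 / (real n - 2) * (Af i q y * dl j l - Af i l y * dl j q + Af j l y * dl i q - Af j q y * dl i l)"
proof -
  have "weyl n G i j q l y = 0" by (rule W) (use i j q l in auto)
  then show ?thesis unfolding weyl_def Af_def dl_def by (simp add: algebra_simps)
qed

lemma R2A:
  assumes i: "i \<in> {1..n-1}" and q: "q \<in> {1..n-1}" and y: "y n = 0"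
  shows "real k * (real k + 1) * G i q y = - 1 / (real n - 2) * (nx2 y * Af i q y - y q * Ax i y + dl i q * xAx y - y i * Ax q y)"
proof -
  define T where "T = {1..n-1}"
  have fT: "finite T" unfolding T_def by simp
  have e1: "(\<Sum>j\<in>T. \<Sum>l\<in>T. y j * y l * (Af i q y * dl j l)) = nx2 y * Af i q y"
  proof -
    have "(\<Sum>j\<in>T. \<Sum>l\<in>T. y j * y l * (Af i q y * dl j l)) = (\<Sum>j\<in>T. \<Sum>l\<in>T. (y j * y l * Af i q y) * dl j l)"
      by (simp add: mult_ac)
    also have "\<dots> = (\<Sum>j\<in>T. y j * y j * Af i q y)" using fT by (simp add: sum_dl)
    finally show ?thesis unfolding nx2_def T_def by (simp add: sum_distrib_right)
  qed
  have e2: "(\<Sum>j\<in>T. \<Sum>l\<in>T. y j * y l * (Af i l y * dl j q)) = y q * Ax i y"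
  proof -
    have "(\<Sum>j\<in>T. \<Sum>l\<in>T. y j * y l * (Af i l y * dl j q)) = (\<Sum>l\<in>T. \<Sum>j\<in>T. (y j * y l * Af i l y) * dl j q)"
      by (subst sum.swap) (simp add: mult_ac)
    also have "\<dots> = (\<Sum>l\<in>T. y q * y l * Af i l y)" using fT q by (simp add: sum_dl' T_def)
    finally show ?thesis unfolding Ax_def T_def by (simp add: sum_distrib_left mult_ac)
  qed
  have e3: "(\<Sum>j\<in>T. \<Sum>l\<in>T. y j * y l * (Af j l y * dl i q)) = dl i q * xAx y"
    unfolding xAx_def T_def by (simp add: sum_distrib_left sum_distrib_right mult_ac)
  have e4: "(\<Sum>j\<in>T. \<Sum>l\<in>T. y j * y l * (Af j q y * dl i l)) = y i * Ax q y"
  proof -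
    have "(\<Sum>j\<in>T. \<Sum>l\<in>T. y j * y l * (Af j q y * dl i l)) = (\<Sum>j\<in>T. \<Sum>l\<in>T. (y j * y l * Af j q y) * dl i l)"
      by (simp add: mult_ac)
    also have "\<dots> = (\<Sum>j\<in>T. y j * y i * Af j q y)" using fT i by (simp add: sum_dl T_def)
    also have "\<dots> = (\<Sum>j\<in>T. y i * (y j * Af q j y))"
      by (rule sum.cong[OF refl]) (use Af_sym' q in \<open>auto simp: T_def\<close>)
    finally show ?thesis unfolding Ax_def T_def by (simp add: sum_distrib_left)
  qed
  have "real k * (real k + 1) * G i q y = (\<Sum>j\<in>T. \<Sum>l\<in>T. y j * y l * (pd j (pd l (G i q)) y - pd j (pd q (G i l)) y
            + pd i (pd q (G j l)) y - pd i (pd l (G j q)) y))"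
    using R2[where y=y, OF i q y] unfolding T_def by simp
  also have "\<dots> = (\<Sum>j\<in>T. \<Sum>l\<in>T. y j * y l * (- 1 / (real n - 2) * (Af i q y * dl j l - Af i l y * dl j q + Af j l y * dl i q - Af j q y * dl i l)))"
    by (intro sum.cong refl) (use Wcomp i q in \<open>simp add: T_def\<close>)
  also have "\<dots> = - 1 / (real n - 2) * ((\<Sum>j\<in>T. \<Sum>l\<in>T. y j * y l * (Af i q y * dl j l))
       - (\<Sum>j\<in>T. \<Sum>l\<in>T. y j * y l * (Af i l y * dl j q)) + (\<Sum>j\<in>T. \<Sum>l\<in>T. y j * y l * (Af j l y * dl i q))
       - (\<Sum>j\<in>T. \<Sum>l\<in>T. y j * y l * (Af j q y * dl i l)))"
  proof -
    have "(\<Sum>j\<in>T. \<Sum>l\<in>T. y j * y l * (- 1 / (real n - 2) * (Af i q y * dl j l - Af i l y * dl j q + Af j l y * dl i q - Af j q y * dl i l)))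
      = - 1 / (real n - 2) * (\<Sum>j\<in>T. \<Sum>l\<in>T. y j * y l * (Af i q y * dl j l - Af i l y * dl j q + Af j l y * dl i q - Af j q y * dl i l))"
      by (simp only: sum_distrib_left mult.left_commute)
    also have "(\<Sum>j\<in>T. \<Sum>l\<in>T. y j * y l * (Af i q y * dl j l - Af i l y * dl j q + Af j l y * dl i q - Af j q y * dl i l))
      = (\<Sum>j\<in>T. \<Sum>l\<in>T. y j * y l * (Af i q y * dl j l))
       - (\<Sum>j\<in>T. \<Sum>l\<in>T. y j * y l * (Af i l y * dl j q)) + (\<Sum>j\<in>T. \<Sum>l\<in>T. y j * y l * (Af j l y * dl i q))
       - (\<Sum>j\<in>T. \<Sum>l\<in>T. y j * y l * (Af j q y * dl i l))"
      by (simp only: right_diff_distrib distrib_left sum.distrib sum_subtractf)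
    finally show ?thesis .
  qed
  also have "\<dots> = - 1 / (real n - 2) * (nx2 y * Af i q y - y q * Ax i y + dl i q * xAx y - y i * Ax q y)"
    unfolding e1 e2 e3 e4 ..
  finally show ?thesis .
qed

lemma trG': "(\<Sum>i=1..n-1. G i i x) = 0"
proof -
  have "G n n x = 0" using Gn[of n] n4 by simp
  then show ?thesis using trG[of x] sum_last[of n "\<lambda>i. G i i x"] n4 by simp
qed

lemma trace_eq:
  assumes y: "y n = 0"
  shows "nx2 y * (\<Sum>i=1..n-1. Af i i y) + (real n - 3) * xAx y = 0"
proof -
  define T where "T = {1..n-1}"
  have "0 = real k * (real k + 1) * (\<Sum>i\<in>T. G i i y)" using trG' unfolding T_def by simp
  also have "\<dots> = (\<Sum>i\<in>T. real k * (real k + 1) * G i i y)" by (simp add: sum_distrib_left)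
  also have "\<dots> = (\<Sum>i\<in>T. - 1 / (real n - 2) * (nx2 y * Af i i y - y i * Ax i y + xAx y - y i * Ax i y))"
    by (rule sum.cong[OF refl]) (use R2A y in \<open>simp add: T_def\<close>)
  also have "\<dots> = (\<Sum>i\<in>T. - 1 / (real n - 2) * (nx2 y * Af i i y + xAx y - 2 * (y i * Ax i y)))"
    by (rule sum.cong[OF refl]) (simp add: algebra_simps)
  also have "\<dots> = - 1 / (real n - 2) * (\<Sum>i\<in>T. nx2 y * Af i i y + xAx y - 2 * (y i * Ax i y))"
    by (simp only: sum_distrib_left)
  also have "(\<Sum>i\<in>T. nx2 y * Af i i y + xAx y - 2 * (y i * Ax i y)) = nx2 y * (\<Sum>i\<in>T. Af i i y) + real (card T) * xAx y - 2 * (\<Sum>i\<in>T. y i * Ax i y)"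
    by (simp add: sum.distrib sum_subtractf sum_distrib_left)
  also have "real (card T) = real n - 1" unfolding T_def using n4 by (simp add: of_nat_diff)
  also have "(\<Sum>i\<in>T. y i * Ax i y) = xAx y"
    unfolding Ax_def xAx_def T_def by (simp add: sum_distrib_left mult_ac)
  finally have "0 = - 1 / (real n - 2) * (nx2 y * (\<Sum>i\<in>T. Af i i y) + (real n - 3) * xAx y)"
    by (simp add: algebra_simps)
  then show ?thesis using n1 unfolding T_def by simp
qed

end


lemma polyf_divc[simp]: "f \<in> polyf I \<Longrightarrow> (\<lambda>x. f x / a) \<in> polyf I"
  using polyf_multc[of f I "1/a"] by simp
lemma hw_divc[intro]: "hw s r F \<Longrightarrow> hw s r (\<lambda>x. F x / a)"
  using hw_multc[of s r F "1/a"] by simp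

lemma quad_pd:
  assumes "\<And>j l. pf (B j l)"
  shows "pd i (\<lambda>x. \<Sum>j\<in>T. \<Sum>l\<in>T. x j * x l * B j l x) y
    = (if i \<in> T then (\<Sum>l\<in>T. y l * B i l y) + (\<Sum>j\<in>T. y j * B j i y) else 0) + (\<Sum>j\<in>T. \<Sum>l\<in>T. y j * y l * pd i (B j l) y)"
proof (cases "finite T")
  case True
  have t: "pd i (\<lambda>x. x j * x l * B j l x) y = (if i = j then y l * B j l y else 0) + (if i = l then y j * B j l y else 0) + y j * y l * pd i (B j l) y" for j l
    using assms by (cases "i = j"; cases "i = l") (simp_all add: algebra_simps)
  have "pd i (\<lambda>x. \<Sum>j\<in>T. \<Sum>l\<in>T. x j * x l * B j l x) y = (\<Sum>j\<in>T. \<Sum>l\<in>T. pd i (\<lambda>x. x j * x l * B j l x) y)"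
    using assms by simp
  also have "\<dots> = (\<Sum>j\<in>T. \<Sum>l\<in>T. (if i = j then y l * B j l y else 0)) + (\<Sum>j\<in>T. \<Sum>l\<in>T. (if i = l then y j * B j l y else 0))
       + (\<Sum>j\<in>T. \<Sum>l\<in>T. y j * y l * pd i (B j l) y)"
    unfolding t by (simp only: sum.distrib)
  also have "(\<Sum>j\<in>T. \<Sum>l\<in>T. (if i = j then y l * B j l y else 0)) = (if i \<in> T then (\<Sum>l\<in>T. y l * B i l y) else 0)"
  proof -
    have "(\<Sum>j\<in>T. \<Sum>l\<in>T. (if i = j then y l * B j l y else 0)) = (\<Sum>j\<in>T. if i = j then (\<Sum>l\<in>T. y l * B j l y) else 0)"
      by (rule sum.cong) auto
    then show ?thesis using True by simp
  qed
  also have "(\<Sum>j\<in>T. \<Sum>l\<in>T. (if i = l then y j * B j l y else 0)) = (if i \<in> T then (\<Sum>j\<in>T. y j * B j i y) else 0)"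
    using True by simp
  finally show ?thesis by simp
next
  case False then show ?thesis by simp
qed

context core begin

lemma polyAf[simp]: "Af a c \<in> polyf {1..n}"
  unfolding Af_eq dv_def sg_def lap_def using polyG by (simp add: polyf_sum)

lemma hw_dv: "hw 1 k (dv a)" unfolding dv_def by (intro hw_sum) (simp add: hw_pd hom)
lemma hw_sg: "hw 2 k sg" unfolding sg_def by (intro hw_sum) (metis hw_pd hw_dv pf_dv One_nat_def Suc_1)
lemma hw_lap: "hw 2 k (lap (G a c))" unfolding lap_def
  by (intro hw_sum) (metis hw_pd hom pfG pf_pd One_nat_def Suc_1 Suc_eq_plus1)

lemma hwAf: "hw 2 k (Af a c)"
proof -
  have 1: "hw 2 k (pd c (dv a))" for c a using hw_pd[OF pf_dv hw_dv] by (simp add: numeral_2_eq_2)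
  show ?thesis unfolding Af_eq using 1 hw_sg hw_lap by (intro hw_diff hw_add hw_multc hw_divc) auto
qed

lemma Af_zero_k1: "k = 1 \<Longrightarrow> Af a c y = 0"
  using hw_small[OF pf_Af hwAf] by simp

definition trA :: "(nat \<Rightarrow> real) \<Rightarrow> real" where "trA = (\<lambda>x. \<Sum>i=1..n-1. Af i i x)"

lemma pf_trA[simp]: "pf trA" unfolding trA_def by simp
lemma poly_trA[simp]: "trA \<in> polyf {1..n}" unfolding trA_def by (rule polyf_sum) (rule polyAf)

lemma euler2_bd:
  assumes F: "F \<in> polyf {1..n}" and h: "hw 0 r F" and y: "y n = 0"
  shows "(\<Sum>j=1..n-1. \<Sum>l=1..n-1. y j * y l * pd j (pd l F) y) = (real r - 1) * real r * F y"
proof -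
  have pfF: "pf F" using F pf_def by blast
  have E: "(\<lambda>x. \<Sum>l=1..n. x l * pd l F x) = (\<lambda>x. real r * F x)"
    using euler[OF F _ h] by (simp add: fun_eq_iff)
  have E1: "pd j (\<lambda>x. \<Sum>l=1..n. x l * pd l F x) y = pd j (\<lambda>x. real r * F x) y" for j unfolding E ..
  have E2: "pd j F y + (\<Sum>l=1..n. y l * pd j (pd l F) y) = real r * pd j F y" if "j \<in> {1..n-1}" for j
  proof -
    have "j \<le> n" using that by auto
    then show ?thesis using E1[of j] that pfF n4 by (simp add: sum.distrib)
  qed
  have E3: "(\<Sum>l=1..n-1. y l * pd j (pd l F) y) = (real r - 1) * pd j F y" if "j \<in> {1..n-1}" for j
    using E2[OF that] sum_last[of n "\<lambda>l. y l * pd j (pd l F) y"] n4 y by (simp add: algebra_simps)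
  have "(\<Sum>j=1..n-1. \<Sum>l=1..n-1. y j * y l * pd j (pd l F) y) = (\<Sum>j=1..n-1. y j * (\<Sum>l=1..n-1. y l * pd j (pd l F) y))"
    by (simp add: sum_distrib_left mult.assoc)
  also have "\<dots> = (\<Sum>j=1..n-1. y j * ((real r - 1) * pd j F y))"
    by (rule sum.cong[OF refl]) (use E3 in auto)
  also have "\<dots> = (real r - 1) * (\<Sum>j=1..n-1. y j * pd j F y)" by (simp add: sum_distrib_left mult_ac)
  also have "\<dots> = (real r - 1) * real r * F y" using euler_bd[where y=y, OF F h y] by simp
  finally show ?thesis .
qed

lemma cot: "a \<in> {1..n} \<Longrightarrow> b \<in> {1..n} \<Longrightarrow> c \<in> {1..n} \<Longrightarrow> pd b (Af a c) = pd a (Af b c)"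
  using cotton by (simp add: fun_eq_iff)

lemma hwA0: "k \<ge> 2 \<Longrightarrow> hw 0 (k - 2) (Af a c)"
  using hw_lower[OF hwAf] by simp

lemma hw_trA: "k \<ge> 2 \<Longrightarrow> hw 0 (k - 2) trA"
  unfolding trA_def using hwA0 by (intro hw_sum) auto

lemma xAx_fun: "xAx = (\<lambda>x. \<Sum>j=1..n-1. \<Sum>l=1..n-1. x j * x l * Af j l x)"
  by (simp add: xAx_def fun_eq_iff)

lemma Ax_fun: "Ax i = (\<lambda>x. \<Sum>l=1..n-1. x l * Af i l x)"
  by (simp add: Ax_def fun_eq_iff)

lemma pf_Ax[simp]: "pf (Ax i)" unfolding Ax_fun by simp
lemma pf_xAx[simp]: "pf xAx" unfolding xAx_fun by simp

lemma Tsub: "j \<in> {1..n-1} \<Longrightarrow> j \<in> {1..n}" by auto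

lemma pdF_fun: "i \<in> {1..n-1} \<Longrightarrow> pd i xAx = (\<lambda>x. 2 * Ax i x + (\<Sum>j=1..n-1. \<Sum>l=1..n-1. x j * x l * pd i (Af j l) x))"
proof -
  assume i: "i \<in> {1..n-1}"
  have "(\<Sum>j=1..n-1. y j * Af j i y) = Ax i y" for y
    unfolding Ax_def by (rule sum.cong[OF refl]) (use Af_sym' i in auto)
  moreover have "pd i (\<lambda>x. \<Sum>j=1..n-1. \<Sum>l=1..n-1. x j * x l * Af j l x) y
    = (if i \<in> {1..n-1} then (\<Sum>l=1..n-1. y l * Af i l y) + (\<Sum>j=1..n-1. y j * Af j i y) else 0)
      + (\<Sum>j=1..n-1. \<Sum>l=1..n-1. y j * y l * pd i (Af j l) y)" for y
    by (rule quad_pd) simp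
  ultimately show ?thesis unfolding xAx_fun using i by (simp add: fun_eq_iff Ax_def)
qed

lemma pdF_bd:
  assumes k2: "k \<ge> 2" and i: "i \<in> {1..n-1}" and y: "y n = 0"
  shows "pd i xAx y = real k * Ax i y"
proof -
  have "(\<Sum>j=1..n-1. \<Sum>l=1..n-1. y j * y l * pd i (Af j l) y) = (\<Sum>l=1..n-1. y l * (\<Sum>j=1..n-1. y j * pd j (Af i l) y))"
  proof -
    have "(\<Sum>j=1..n-1. \<Sum>l=1..n-1. y j * y l * pd i (Af j l) y) = (\<Sum>j=1..n-1. \<Sum>l=1..n-1. y j * y l * pd j (Af i l) y)"
      by (intro sum.cong refl) (use cot i Tsub in auto)
    also have "\<dots> = (\<Sum>l=1..n-1. \<Sum>j=1..n-1. y l * (y j * pd j (Af i l) y))"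
      by (subst sum.swap) (simp add: mult_ac)
    finally show ?thesis by (simp add: sum_distrib_left)
  qed
  also have "\<dots> = (\<Sum>l=1..n-1. y l * ((real k - 2) * Af i l y))"
    using euler_bd[where y=y, OF polyAf hwA0[OF k2] y] k2 by (simp add: of_nat_diff)
  also have "\<dots> = (real k - 2) * Ax i y" unfolding Ax_def by (simp add: sum_distrib_left mult_ac)
  finally show ?thesis using pdF_fun[OF i] by (simp add: algebra_simps)
qed

lemma divT: "l \<in> {1..n-1} \<Longrightarrow> (\<lambda>x. \<Sum>i=1..n-1. pd i (Af i l) x) = pd l trA"
proof -
  assume l: "l \<in> {1..n-1}"
  have "pd i (Af i l) = pd l (Af i i)" if "i \<in> {1..n-1}" for i
    using cot[of l i i] Af_sym'[OF that l] that l by auto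
  then show ?thesis unfolding trA_def by (simp add: fun_eq_iff)
qed

lemma pdAx: "i \<in> {1..n-1} \<Longrightarrow> pd i (Ax i) y = Af i i y + (\<Sum>l=1..n-1. y l * pd i (Af i l) y)"
  unfolding Ax_fun by (simp add: sum.distrib)

lemma lapF_bd:
  assumes k2: "k \<ge> 2" and y: "y n = 0"
  shows "(\<Sum>i=1..n-1. pd i (pd i xAx) y) = real k * (real k - 1) * trA y"
proof -
  have e1: "pd i (pd i xAx) y = 2 * Af i i y + 4 * (\<Sum>l=1..n-1. y l * pd i (Af i l) y)
      + (\<Sum>j=1..n-1. \<Sum>l=1..n-1. y j * y l * pd i (pd i (Af j l)) y)" if i: "i \<in> {1..n-1}" for i
  proof -
    have s: "(\<Sum>j=1..n-1. y j * pd i (Af j i) y) = (\<Sum>l=1..n-1. y l * pd i (Af i l) y)"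
      by (rule sum.cong[OF refl]) (use Af_sym' i in auto)
    have "pd i (pd i xAx) y = 2 * pd i (Ax i) y + pd i (\<lambda>x. \<Sum>j=1..n-1. \<Sum>l=1..n-1. x j * x l * pd i (Af j l) x) y"
      unfolding pdF_fun[OF i] by simp
    also have "\<dots> = 2 * Af i i y + 4 * (\<Sum>l=1..n-1. y l * pd i (Af i l) y)
      + (\<Sum>j=1..n-1. \<Sum>l=1..n-1. y j * y l * pd i (pd i (Af j l)) y)"
      unfolding pdAx[OF i] quad_pd[of "\<lambda>j l. pd i (Af j l)", OF pf_pd[OF pf_Af]] using i s by simp
    finally show ?thesis .
  qed
  have e2: "(\<Sum>i=1..n-1. \<Sum>l=1..n-1. y l * pd i (Af i l) y) = (real k - 2) * trA y"
  proof -
    have "(\<Sum>i=1..n-1. \<Sum>l=1..n-1. y l * pd i (Af i l) y) = (\<Sum>l=1..n-1. y l * (\<Sum>i=1..n-1. pd i (Af i l) y))"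
      by (subst sum.swap) (simp add: sum_distrib_left)
    also have "\<dots> = (\<Sum>l=1..n-1. y l * pd l trA y)"
      by (rule sum.cong[OF refl]) (use divT in \<open>auto simp: fun_eq_iff\<close>)
    also have "\<dots> = (real k - 2) * trA y"
      using euler_bd[where y=y, OF poly_trA hw_trA[OF k2] y] k2 by (simp add: of_nat_diff)
    finally show ?thesis .
  qed
  have e3: "(\<Sum>i=1..n-1. \<Sum>j=1..n-1. \<Sum>l=1..n-1. y j * y l * pd i (pd i (Af j l)) y) = (real k - 3) * (real k - 2) * trA y"
  proof -
    have "(\<Sum>i=1..n-1. pd i (pd i (Af j l)) y) = pd j (pd l trA) y" if j: "j \<in> {1..n-1}" and l: "l \<in> {1..n-1}" for j l
    proof -
      have "(\<Sum>i=1..n-1. pd i (pd i (Af j l)) y) = (\<Sum>i=1..n-1. pd j (pd i (Af i l)) y)"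
      proof (rule sum.cong[OF refl])
        fix i assume i: "i \<in> {1..n-1}"
        have "pd i (Af j l) = pd j (Af i l)" using cot[of j i l] i j l by auto
        then show "pd i (pd i (Af j l)) y = pd j (pd i (Af i l)) y" using pd_comm[OF pf_Af] by metis
      qed
      also have "\<dots> = pd j (\<lambda>x. \<Sum>i=1..n-1. pd i (Af i l) x) y" by simp
      also have "\<dots> = pd j (pd l trA) y" unfolding divT[OF l] ..
      finally show ?thesis .
    qed
    note X = this
    have "(\<Sum>i=1..n-1. \<Sum>j=1..n-1. \<Sum>l=1..n-1. y j * y l * pd i (pd i (Af j l)) y)
        = (\<Sum>j=1..n-1. \<Sum>i=1..n-1. \<Sum>l=1..n-1. y j * y l * pd i (pd i (Af j l)) y)"
      by (rule sum.swap)
    also have "\<dots> = (\<Sum>j=1..n-1. \<Sum>l=1..n-1. \<Sum>i=1..n-1. y j * y l * pd i (pd i (Af j l)) y)"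
      by (rule sum.cong[OF refl]) (rule sum.swap)
    also have "\<dots> = (\<Sum>j=1..n-1. \<Sum>l=1..n-1. y j * y l * (\<Sum>i=1..n-1. pd i (pd i (Af j l)) y))"
      by (simp add: sum_distrib_left)
    also have "\<dots> = (\<Sum>j=1..n-1. \<Sum>l=1..n-1. y j * y l * pd j (pd l trA) y)"
      by (intro sum.cong refl) (use X in auto)
    also have "\<dots> = (real (k - 2) - 1) * real (k - 2) * trA y"
      by (rule euler2_bd[where y=y, OF poly_trA hw_trA[OF k2] y])
    finally show ?thesis using k2 by (simp add: of_nat_diff)
  qed
  have "(\<Sum>i=1..n-1. pd i (pd i xAx) y) = 2 * trA y + 4 * (\<Sum>i=1..n-1. \<Sum>l=1..n-1. y l * pd i (Af i l) y)
      + (\<Sum>i=1..n-1. \<Sum>j=1..n-1. \<Sum>l=1..n-1. y j * y l * pd i (pd i (Af j l)) y)"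
    unfolding trA_def by (simp add: e1 sum.distrib sum_distrib_left)
  also have "\<dots> = real k * (real k - 1) * trA y" unfolding e2 e3 by (simp add: algebra_simps)
  finally show ?thesis .
qed

lemma poly_xAx: "xAx \<in> polyf {1..n}"
  unfolding xAx_fun
proof (rule polyf_sum)
  fix j assume j: "j \<in> {1..n-1}"
  show "(\<lambda>x. \<Sum>l=1..n-1. x j * x l * Af j l x) \<in> polyf {1..n}"
  proof (rule polyf_sum)
    fix l assume l: "l \<in> {1..n-1}"
    show "(\<lambda>x. x j * x l * Af j l x) \<in> polyf {1..n}"
      using j l by (intro polyf_mult polyf_coord polyAf) auto
  qed
qed

lemma hw_xAx: "k \<ge> 2 \<Longrightarrow> hw 0 k xAx"
proof -
  assume k2: "k \<ge> 2"
  have H: "hw 0 (1 + 1 + (k - 2)) (\<lambda>x. x j * x l * Af j l x)" for j l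
    by (intro hw_mult hw_coord hwA0[OF k2])
  have e: "1 + 1 + (k - 2) = k" using k2 by simp
  have "hw 0 k (\<lambda>x. x j * x l * Af j l x)" for j l using H[of j l] unfolding e .
  then show ?thesis unfolding xAx_fun by (intro hw_sum) auto
qed

definition ff :: "(nat \<Rightarrow> real) \<Rightarrow> real" where "ff = (\<lambda>x. xAx (x(n := 0)))"

lemma pd_ff: "i \<in> {1..n-1} \<Longrightarrow> pd i ff = (\<lambda>x. pd i xAx (x(n := 0)))"
  unfolding ff_def using pd_proj[of i n xAx] by (auto simp: fun_eq_iff)

lemma pdpd_ff: "i \<in> {1..n-1} \<Longrightarrow> pd i (pd i ff) x = pd i (pd i xAx) (x(n := 0))"
  unfolding pd_ff using pd_proj[of i n "pd i xAx"] by auto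

lemma ff_zero:
  assumes k2: "k \<ge> 2"
  shows "ff x = 0"
proof -
  define \<mu> where "\<mu> = real k * (real k - 1) * (real n - 3)"
  have mu: "\<mu> > 0" unfolding \<mu>_def using k2 n4 by auto
  have fp: "ff \<in> polyf {1..n}" unfolding ff_def by (rule polyf_proj[OF poly_xAx])
  have fh: "hw 0 k ff" unfolding ff_def by (rule hw_proj[OF hw_xAx[OF k2]])
  have fi: "\<forall>x. ff x = ff (x(n := 0))" unfolding ff_def by simp
  have eq: "\<forall>x. (\<Sum>j=1..n-1. x j * x j) * (\<Sum>i=1..n-1. pd i (pd i ff) x) = - \<mu> * ff x"
  proof
    fix x :: "nat \<Rightarrow> real"
    define y where "y = x(n := 0)"
    have y: "y n = 0" unfolding y_def by simp
    have "(\<Sum>i=1..n-1. pd i (pd i ff) x) = (\<Sum>i=1..n-1. pd i (pd i xAx) y)"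
      unfolding y_def by (rule sum.cong[OF refl]) (rule pdpd_ff)
    also have "\<dots> = real k * (real k - 1) * trA y" by (rule lapF_bd[where y=y, OF k2 y])
    finally have L: "(\<Sum>i=1..n-1. pd i (pd i ff) x) = real k * (real k - 1) * trA y" .
    have N: "(\<Sum>j=1..n-1. x j * x j) = nx2 y" unfolding nx2_def y_def
      by (rule sum.cong[OF refl]) auto
    have T: "nx2 y * trA y + (real n - 3) * xAx y = 0" using trace_eq[where y=y, OF y] unfolding trA_def .
    have "ff x = xAx y" unfolding ff_def y_def ..
    then show "(\<Sum>j=1..n-1. x j * x j) * (\<Sum>i=1..n-1. pd i (pd i ff) x) = - \<mu> * ff x"
    proof -
      have T': "nx2 y * trA y = - ((real n - 3) * xAx y)" using T by linarith
      have "nx2 y * (real k * (real k - 1) * trA y) = real k * (real k - 1) * (nx2 y * trA y)" by (simp add: mult_ac)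
      also have "\<dots> = - \<mu> * xAx y" unfolding T' \<mu>_def by (simp add: mult_ac)
      finally show ?thesis unfolding L N using \<open>ff x = xAx y\<close> by simp
    qed
  qed
  show ?thesis using descent[of n k] n4 fp fh fi mu eq by auto
qed

lemma Ax_bd:
  assumes k2: "k \<ge> 2" and i: "i \<in> {1..n-1}" and y: "y n = 0"
  shows "Ax i y = 0"
proof -
  have "ff = (\<lambda>x. 0)" using ff_zero[OF k2] by (simp add: fun_eq_iff)
  then have "pd i ff y = 0" by simp
  moreover have "pd i ff y = pd i xAx y" using pd_ff[OF i] y by (simp add: fun_upd_idem)
  ultimately show ?thesis using pdF_bd[where y=y, OF k2 i y] k2 by simp
qed

lemma Af_bd:
  assumes i: "i \<in> {1..n-1}" and l: "l \<in> {1..n-1}" and y: "y n = 0"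
  shows "Af i l y = 0"
proof (cases "k \<ge> 2")
  case False
  then have "k = 1" using k1 by simp
  then show ?thesis by (rule Af_zero_k1)
next
  case k2: True
  have s0: "pd l (Ax i) y = 0"
    by (rule bd_tan[of _ n]) (use Ax_bd[OF k2 i] l y n4 in auto)
  have s1: "pd l (Ax i) y = Af i l y + (\<Sum>b=1..n-1. y b * pd b (Af i l) y)"
  proof -
    have "pd l (Af i b) = pd b (Af i l)" if b: "b \<in> {1..n-1}" for b
      using cot[of b l i] Af_sym'[OF i b] Af_sym'[OF i l] i l b by auto
    then show ?thesis unfolding Ax_fun using l by (simp add: sum.distrib)
  qed
  have s2: "(\<Sum>b=1..n-1. y b * pd b (Af i l) y) = (real k - 2) * Af i l y"
    using euler_bd[where y=y, OF polyAf hwA0[OF k2] y] k2 by (simp add: of_nat_diff)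
  have "Af i l y + (real k - 2) * Af i l y = 0" using s0 s1 s2 by simp
  then have "(real k - 1) * Af i l y = 0" by (simp add: algebra_simps)
  then show ?thesis using k2 by simp
qed

lemma G_bd:
  assumes i: "i \<in> {1..n-1}" and q: "q \<in> {1..n-1}" and y: "y n = 0"
  shows "G i q y = 0"
proof -
  have A: "Af a b y = 0" if "a \<in> {1..n-1}" "b \<in> {1..n-1}" for a b using Af_bd[where y=y, OF that y] .
  have "Ax a y = 0" if "a \<in> {1..n-1}" for a unfolding Ax_def using A that by simp
  moreover have "xAx y = 0" unfolding xAx_def using A by simp
  ultimately have "real k * (real k + 1) * G i q y = 0" using R2A[where y=y, OF i q y] A[OF i q] i q by simp
  then show ?thesis using k1 by simp
qed

end


definition Mop :: "nat \<Rightarrow> (nat \<Rightarrow> nat \<Rightarrow> (nat \<Rightarrow> real) \<Rightarrow> real) \<Rightarrow> nat \<Rightarrow> nat \<Rightarrow> (nat \<Rightarrow> real) \<Rightarrow> real" where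
  "Mop n F i j = (\<lambda>x. - ((\<Sum>e=1..n-1. pd j (pd e (F i e)) x) + (\<Sum>e=1..n-1. pd i (pd e (F j e)) x)
     - (\<Sum>e=1..n-1. pd e (pd e (F i j)) x)) + 2 / (real n - 1) * (\<Sum>e=1..n-1. \<Sum>f=1..n-1. pd e (pd f (F e f)) x) * dl i j)"

lemma pf_Mop[simp]: "(\<And>a b. pf (F a b)) \<Longrightarrow> pf (Mop n F i j)"
  unfolding Mop_def by simp

lemma pd_Mop: "(\<And>a b. pf (F a b)) \<Longrightarrow> pd c (Mop n F i j) = Mop n (\<lambda>a b. pd c (F a b)) i j"
proof -
  assume pf: "\<And>a b. pf (F a b)"
  have c3: "pd c (pd u (pd v (F a b))) = pd u (pd v (pd c (F a b)))" for u v a b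
    by (metis pd_comm pf pf_pd)
  show ?thesis unfolding Mop_def using pf by (simp add: c3)
qed

lemma Mop_bd:
  assumes pf: "\<And>a b. pf (F a b)" and z: "\<And>a b x. a \<in> {1..n-1} \<Longrightarrow> b \<in> {1..n-1} \<Longrightarrow> x n = 0 \<Longrightarrow> F a b x = 0"
    and i: "i \<in> {1..n-1}" and j: "j \<in> {1..n-1}" and y: "y n = 0" and n: "n \<ge> 1"
  shows "Mop n F i j y = 0"
proof -
  have d: "pd u (pd v (F a b)) y = 0" if "u \<in> {1..n-1}" "v \<in> {1..n-1}" "a \<in> {1..n-1}" "b \<in> {1..n-1}" for u v a b
    by (rule bd_tan2[of _ n]) (use that pf z y n in auto)
  show ?thesis unfolding Mop_def using d i j by simp
qed

lemma line_zero:
  assumes F: "pf F" and F2: "\<And>x. pd m (pd m F) x = 0" and b0: "\<And>x. x m = 0 \<Longrightarrow> F x = 0"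
    and b1: "\<And>x. x m = 0 \<Longrightarrow> pd m F x = 0"
  shows "F x = 0"
proof -
  define z where "z = x(m := 0)"
  define g where "g t = F (z(m := t))" for t
  have zz: "z(m := z m + s) = z(m := s)" for s by (simp add: z_def)
  have g': "(g has_real_derivative pd m F (z(m := t))) (at t)" for t
    using polyf_coord_deriv[of F _ z m t] F unfolding g_def pf_def zz by (metis zz)
  have h': "((\<lambda>t. pd m F (z(m := t))) has_real_derivative 0) (at t)" for t
  proof -
    have "((\<lambda>s. pd m F (z(m := z m + s))) has_real_derivative pd m (pd m F) (z(m := z m + t))) (at t)"
      using polyf_coord_deriv[of "pd m F" _ z m t] F unfolding pf_def by (metis polyf_pd)
    then show ?thesis using F2 unfolding zz by simp
  qed
  have "pd m F (z(m := t)) = pd m F (z(m := 0))" for t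
    using DERIV_isconst_all[of "\<lambda>t. pd m F (z(m := t))"] h' by blast
  then have g'0: "(g has_real_derivative 0) (at t)" for t using g' b1[of "z(m := 0)"] by simp
  have "g (x m) = g 0" using DERIV_isconst_all[of g] g'0 by blast
  moreover have "g (x m) = F x" unfolding g_def z_def by simp
  moreover have "g 0 = 0" unfolding g_def using b0 by simp
  ultimately show ?thesis by simp
qed

lemma interior:
  assumes n4: "n \<ge> 4"
  shows "\<forall>F. (\<forall>a b. F a b \<in> polyf {1..n}) \<longrightarrow> (\<forall>a b. hw 0 r (F a b))
    \<longrightarrow> (\<forall>i\<in>{1..n-1}. \<forall>j\<in>{1..n-1}. (\<lambda>x. (real n - 3) * pd n (pd n (F i j)) x) = Mop n F i j)
    \<longrightarrow> (\<forall>i\<in>{1..n-1}. \<forall>j\<in>{1..n-1}. \<forall>x. x n = 0 \<longrightarrow> F i j x = 0)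
    \<longrightarrow> (\<forall>i\<in>{1..n-1}. \<forall>j\<in>{1..n-1}. \<forall>x. x n = 0 \<longrightarrow> pd n (F i j) x = 0)
    \<longrightarrow> (\<forall>i\<in>{1..n-1}. \<forall>j\<in>{1..n-1}. \<forall>x. F i j x = 0)"
proof (induction r rule: less_induct)
  case (less r)
  show ?case
  proof (intro allI impI ballI)
    fix F :: "nat \<Rightarrow> nat \<Rightarrow> (nat \<Rightarrow> real) \<Rightarrow> real" and i j x
    assume Fp: "\<forall>a b. F a b \<in> polyf {1..n}" and Fh: "\<forall>a b. hw 0 r (F a b)"
      and E: "\<forall>i\<in>{1..n-1}. \<forall>j\<in>{1..n-1}. (\<lambda>x. (real n - 3) * pd n (pd n (F i j)) x) = Mop n F i j"
      and B0: "\<forall>i\<in>{1..n-1}. \<forall>j\<in>{1..n-1}. \<forall>x. x n = 0 \<longrightarrow> F i j x = 0"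
      and B1: "\<forall>i\<in>{1..n-1}. \<forall>j\<in>{1..n-1}. \<forall>x. x n = 0 \<longrightarrow> pd n (F i j) x = 0"
      and i: "i \<in> {1..n-1}" and j: "j \<in> {1..n-1}"
    have pfF: "\<And>a b. pf (F a b)" using Fp pf_def by blast
    define F' where "F' = (\<lambda>a b. pd n (pd n (F a b)))"
    have pfF': "\<And>a b. pf (F' a b)" unfolding F'_def using pfF by simp
    have F'p: "\<forall>a b. F' a b \<in> polyf {1..n}" unfolding F'_def using Fp by simp
    have F'h2: "hw 2 r (F' a b)" for a b unfolding F'_def
      by (metis hw_pd pfF pf_pd Fh One_nat_def Suc_1)
    have n3: "real n - 3 \<noteq> 0" using n4 by simp
    have F'0: "\<forall>a\<in>{1..n-1}. \<forall>b\<in>{1..n-1}. \<forall>y. F' a b y = 0"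
    proof (cases "r < 2")
      case True
      then show ?thesis using hw_small[OF pfF' F'h2] by blast
    next
      case False
      have F'h: "\<forall>a b. hw 0 (r - 2) (F' a b)" using hw_lower[OF F'h2] False by simp
      have E': "\<forall>a\<in>{1..n-1}. \<forall>b\<in>{1..n-1}. (\<lambda>x. (real n - 3) * pd n (pd n (F' a b)) x) = Mop n F' a b"
      proof (intro ballI)
        fix a b assume a: "a \<in> {1..n-1}" and b: "b \<in> {1..n-1}"
        have "pd n (pd n (\<lambda>x. (real n - 3) * pd n (pd n (F a b)) x)) = pd n (pd n (Mop n F a b))"
          using E a b by simp
        then show "(\<lambda>x. (real n - 3) * pd n (pd n (F' a b)) x) = Mop n F' a b"
          using pfF by (simp add: pd_Mop F'_def)
      qed
      have B0': "\<forall>a\<in>{1..n-1}. \<forall>b\<in>{1..n-1}. \<forall>y. y n = 0 \<longrightarrow> F' a b y = 0"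
      proof (intro ballI allI impI)
        fix a b and y :: "nat \<Rightarrow> real" assume a: "a \<in> {1..n-1}" and b: "b \<in> {1..n-1}" and y: "y n = 0"
        have "(real n - 3) * F' a b y = Mop n F a b y"
          using fun_cong[OF E[rule_format, OF a b], of y] unfolding F'_def by simp
        also have "\<dots> = 0" by (rule Mop_bd[where n=n and y=y, OF pfF _ a b y]) (use B0 n4 in auto)
        finally show "F' a b y = 0" using n3 by simp
      qed
      have B1': "\<forall>a\<in>{1..n-1}. \<forall>b\<in>{1..n-1}. \<forall>y. y n = 0 \<longrightarrow> pd n (F' a b) y = 0"
      proof (intro ballI allI impI)
        fix a b and y :: "nat \<Rightarrow> real" assume a: "a \<in> {1..n-1}" and b: "b \<in> {1..n-1}" and y: "y n = 0"
        have "pd n (\<lambda>x. (real n - 3) * pd n (pd n (F a b)) x) = pd n (Mop n F a b)"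
          using E a b by simp
        then have "(real n - 3) * pd n (F' a b) y = Mop n (\<lambda>a b. pd n (F a b)) a b y"
          using pfF by (simp add: pd_Mop F'_def fun_eq_iff)
        also have "\<dots> = 0" by (rule Mop_bd[where n=n and y=y, OF _ _ a b y]) (use B1 pfF n4 in auto)
        finally show "pd n (F' a b) y = 0" using n3 by simp
      qed
      have "r - 2 < r" using False by simp
      then show ?thesis using less.IH F'p F'h E' B0' B1' by blast
    qed
    show "F i j x = 0"
    proof (rule line_zero[of "F i j" n])
      show "pf (F i j)" by (rule pfF)
      show "\<And>x. pd n (pd n (F i j)) x = 0" using F'0 i j unfolding F'_def by blast
      show "\<And>x. x n = 0 \<Longrightarrow> F i j x = 0" using B0 i j by blast
      show "\<And>x. x n = 0 \<Longrightarrow> pd n (F i j) x = 0" using B1 i j by blast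
    qed
  qed
qed

context core begin

lemma Gn': "a \<in> {1..n} \<Longrightarrow> G n a = (\<lambda>x. 0)"
  using symG[of n a] Gn[of a] n4 by auto

lemma dvT: "i \<in> {1..n} \<Longrightarrow> dv i = (\<lambda>x. \<Sum>e=1..n-1. pd e (G i e) x)"
proof -
  assume i: "i \<in> {1..n}"
  have "dv i x = (\<Sum>e=1..n-1. pd e (G i e) x)" for x
    unfolding dv_def using sum_last[of n "\<lambda>e. pd e (G i e) x"] n4 Gn[OF i] by simp
  then show ?thesis by (simp add: fun_eq_iff)
qed

lemma dv_n: "dv n = (\<lambda>x. 0)"
  unfolding dv_def
proof (rule ext, rule sum.neutral, rule ballI)
  fix x e assume "e \<in> {1..n}"
  then show "pd e (G n e) x = 0" using Gn'[of e] by simp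
qed

lemma lapT: "lap F x = (\<Sum>e=1..n-1. pd e (pd e F) x) + pd n (pd n F) x"
  unfolding lap_def using sum_last[of n "\<lambda>e. pd e (pd e F) x"] n4 by simp

lemma sgT: "sg x = (\<Sum>e=1..n-1. \<Sum>f=1..n-1. pd e (pd f (G e f)) x)"
proof -
  have "sg x = (\<Sum>e=1..n-1. pd e (dv e) x) + pd n (dv n) x"
    unfolding sg_def using sum_last[of n "\<lambda>e. pd e (dv e) x"] n4 by simp
  also have "\<dots> = (\<Sum>e=1..n-1. pd e (dv e) x)" unfolding dv_n by simp
  also have "\<dots> = (\<Sum>e=1..n-1. \<Sum>f=1..n-1. pd e (pd f (G e f)) x)"
    by (rule sum.cong[OF refl]) (subst dvT, auto)
  finally show ?thesis .
qed

lemma E1: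
  assumes i: "i \<in> {1..n-1}" and j: "j \<in> {1..n-1}"
  shows "(\<lambda>x. (real n - 3) * pd n (pd n (G i j)) x) = Mop n G i j"
proof
  fix x
  have i': "i \<in> {1..n}" and j': "j \<in> {1..n}" and nn: "n \<in> {1..n}" using i j n4 by auto
  have inj: "i \<noteq> n" "j \<noteq> n" using i j n4 by auto
  have w: "weyl n G i n j n x = 0" by (rule W) (use i' j' nn in auto)
  define P where "P = pd n (pd n (G i j)) x"
  define a1 where "a1 = (\<Sum>e=1..n-1. pd j (pd e (G i e)) x)"
  define a2 where "a2 = (\<Sum>e=1..n-1. pd i (pd e (G j e)) x)"
  define a3 where "a3 = (\<Sum>e=1..n-1. pd e (pd e (G i j)) x)"
  define S where "S = (\<Sum>e=1..n-1. \<Sum>f=1..n-1. pd e (pd f (G e f)) x)"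
  have Aij: "schouten n G i j x = a1 + a2 - (a3 + P) - S / (real n - 1) * dl i j"
  proof -
    have "schouten n G i j x = Af i j x" unfolding Af_def ..
    also have "\<dots> = pd j (dv i) x + pd i (dv j) x - lap (G i j) x - sg x / (real n - 1) * dl i j"
      unfolding Af_eq ..
    also have "\<dots> = a1 + a2 - (a3 + P) - S / (real n - 1) * dl i j"
      unfolding dvT[OF i'] dvT[OF j'] lapT sgT a1_def a2_def a3_def P_def S_def by simp
    finally show ?thesis .
  qed
  have Ann: "schouten n G n n x = - S / (real n - 1)"
  proof -
    have "schouten n G n n x = Af n n x" unfolding Af_def ..
    also have "\<dots> = - S / (real n - 1)"
      unfolding Af_eq dv_n lap_def sgT S_def using Gn'[OF nn] by simp
    finally show ?thesis .
  qed
  have "P + 1 / (real n - 2) * (schouten n G i j x + schouten n G n n x * dl i j) = 0"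
    using w inj Gn[OF i'] Gn'[OF j'] Gn'[OF nn] unfolding weyl_def P_def dl_def by simp
  moreover define Tt where "Tt = S / (real n - 1) * dl i j"
  ultimately have "P + 1 / (real n - 2) * (a1 + a2 - (a3 + P) - Tt - Tt) = 0"
    unfolding Aij Ann by (simp add: Tt_def)
  then have "(real n - 2) * (P + 1 / (real n - 2) * (a1 + a2 - (a3 + P) - Tt - Tt)) = 0" by simp
  then have "(real n - 2) * P + (a1 + a2 - (a3 + P) - Tt - Tt) = 0"
    using n1 by (simp add: distrib_left)
  then have "(real n - 3) * P = - (a1 + a2 - a3) + 2 * Tt"
    by (simp add: algebra_simps)
  moreover have "2 * Tt = 2 / (real n - 1) * S * dl i j" unfolding Tt_def by simp
  ultimately have "(real n - 3) * P = - (a1 + a2 - a3) + 2 / (real n - 1) * S * dl i j" by simp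
  then show "(real n - 3) * pd n (pd n (G i j)) x = Mop n G i j x"
    unfolding Mop_def P_def a1_def a2_def a3_def S_def by simp
qed

lemma G_zero: "a \<in> {1..n} \<Longrightarrow> b \<in> {1..n} \<Longrightarrow> G a b x = 0"
proof -
  assume a: "a \<in> {1..n}" and b: "b \<in> {1..n}"
  have int: "\<forall>i\<in>{1..n-1}. \<forall>j\<in>{1..n-1}. \<forall>x. G i j x = 0"
    using interior[OF n4, of k] polyG hom E1 G_bd bdn by blast
  show ?thesis
  proof (cases "a = n \<or> b = n")
    case True
    then show ?thesis using Gn[OF a] Gn'[OF b] by auto
  next
    case False
    then show ?thesis using int a b by auto
  qed
qed

end



lemma weyl_add:
  assumes "\<And>a b. pf (F a b)" "\<And>a b. pf (G a b)"
  shows "weyl n (\<lambda>a b x. F a b x + G a b x) a b c d x = weyl n F a b c d x + weyl n G a b c d x"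
  unfolding weyl_def schouten_def using assms by (simp add: sum.distrib algebra_simps)

lemma weyl_sum:
  assumes "finite K" "\<And>m a b. pf (F m a b)"
  shows "weyl n (\<lambda>a b x. \<Sum>m\<in>K. F m a b x) a b c d x = (\<Sum>m\<in>K. weyl n (F m) a b c d x)"
  using assms(1)
proof (induction K rule: finite_induct)
  case empty
  show ?case unfolding weyl_def schouten_def by simp
next
  case (insert j K)
  have "weyl n (\<lambda>a b x. \<Sum>m\<in>insert j K. F m a b x) a b c d x = weyl n (\<lambda>a b x. F j a b x + (\<Sum>m\<in>K. F m a b x)) a b c d x"
    using insert by simp
  also have "\<dots> = weyl n (F j) a b c d x + weyl n (\<lambda>a b x. \<Sum>m\<in>K. F m a b x) a b c d x"
    by (rule weyl_add) (use assms(2) in auto)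
  finally show ?case using insert by simp
qed

lemma schouten_cong:
  assumes FF: "\<And>a b. a \<in> {1..n} \<Longrightarrow> b \<in> {1..n} \<Longrightarrow> F a b = F' a b"
    and a: "a \<in> {1..n}" and c: "c \<in> {1..n}"
  shows "schouten n F a c x = schouten n F' a c x"
proof -
  have e1: "(\<Sum>e=1..n. pd c (pd e (F a e)) x) = (\<Sum>e=1..n. pd c (pd e (F' a e)) x)"
    by (rule sum.cong[OF refl]) (metis FF a)
  have e2: "(\<Sum>e=1..n. pd a (pd e (F c e)) x) = (\<Sum>e=1..n. pd a (pd e (F' c e)) x)"
    by (rule sum.cong[OF refl]) (metis FF c)
  have e3: "(\<Sum>e=1..n. pd e (pd e (F a c)) x) = (\<Sum>e=1..n. pd e (pd e (F' a c)) x)"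
    using FF[OF a c] by simp
  have e4: "(\<Sum>e=1..n. \<Sum>f=1..n. pd e (pd f (F e f)) x) = (\<Sum>e=1..n. \<Sum>f=1..n. pd e (pd f (F' e f)) x)"
    by (intro sum.cong refl) (metis FF)
  show ?thesis unfolding schouten_def e1 e2 e3 e4 ..
qed

lemma weyl_cong:
  assumes "\<And>a b. a \<in> {1..n} \<Longrightarrow> b \<in> {1..n} \<Longrightarrow> F a b = F' a b"
    and "a \<in> {1..n}" "b \<in> {1..n}" "c \<in> {1..n}" "d \<in> {1..n}"
  shows "weyl n F a b c d x = weyl n F' a b c d x"
  unfolding weyl_def using assms schouten_cong[where F=F and F'=F', OF assms(1)] by simp

lemma hw_pd2: "pf F \<Longrightarrow> hw 0 m F \<Longrightarrow> hw 2 m (pd u (pd v F))"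
  by (metis hw_pd pf_pd One_nat_def Suc_1)

lemma hw_weyl:
  assumes "\<And>a b. pf (F a b)" "\<And>a b. hw 0 m (F a b)"
  shows "hw 2 m (\<lambda>x. weyl n F a b c d x)"
proof -
  have P: "hw 2 m (pd u (pd v (F a b)))" for u v a b using hw_pd2 assms by blast
  have S: "hw 2 m (\<lambda>x. schouten n F a c x)" for a c
    unfolding schouten_def using P by (intro hw_diff hw_add hw_sum hw_multc hw_cmult) auto
  show ?thesis unfolding weyl_def using P S by (intro hw_diff hw_add hw_sum hw_multc hw_cmult) auto
qed

lemma transfer:
  assumes K: "finite K" and h: "\<forall>m\<in>K. \<forall>t>0. \<forall>x. t ^ s * \<Phi> m (sc t x) = t ^ (m + c) * \<Phi> m x"
    and Psc: "\<And>x t. P x \<Longrightarrow> t > 0 \<Longrightarrow> P (sc t x)" and Z: "\<And>x. P x \<Longrightarrow> (\<Sum>m\<in>K. \<Phi> m x) = 0"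
    and m: "m \<in> K" and x: "P x"
  shows "\<Phi> m x = 0"
proof (rule sep_coeffs[OF K _ m, of "\<lambda>j. \<Phi> j x"])
  show "\<forall>t>0. (\<Sum>j\<in>K. \<Phi> j x * t ^ j) = 0"
  proof (intro allI impI)
    fix t :: real assume t: "t > 0"
    have "0 = t ^ s * (\<Sum>j\<in>K. \<Phi> j (sc t x))" using Z[OF Psc[OF x t]] by simp
    also have "\<dots> = (\<Sum>j\<in>K. t ^ (j + c) * \<Phi> j x)"
      unfolding sum_distrib_left by (rule sum.cong[OF refl]) (use h t in auto)
    also have "\<dots> = t ^ c * (\<Sum>j\<in>K. \<Phi> j x * t ^ j)"
      by (simp add: sum_distrib_left power_add mult_ac)
    finally show "(\<Sum>j\<in>K. \<Phi> j x * t ^ j) = 0" using t by simp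
  qed
qed

lemma polyf_prod: "(\<And>i. i \<in> A \<Longrightarrow> F i \<in> polyf I) \<Longrightarrow> (\<lambda>x. \<Prod>i\<in>A. F i x) \<in> polyf I"
proof (induction A rule: infinite_finite_induct)
  case (infinite A) then show ?case by (simp add: polyf.pconst)
next
  case empty then show ?case by (simp add: polyf.pconst)
next
  case (insert a A) then show ?case by (simp add: polyf.pmult)
qed

lemma poly_mono: "monomial_fun n \<alpha> \<in> polyf {1..n}"
proof -
  have "(\<lambda>x. \<Prod>k=1..n. x k ^ \<alpha> k) \<in> polyf {1..n}"
    by (rule polyf_prod) (rule polyf_power, rule polyf_coord)
  then show ?thesis unfolding monomial_fun_def[abs_def] .
qed

lemma hw_mono: "hw 0 (\<Sum>k=1..n. \<alpha> k) (monomial_fun n \<alpha>)"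
  unfolding hw_def monomial_fun_def sc_def
  by (simp add: power_mult_distrib prod.distrib power_sum)

lemma finite_MI: "finite (multi_indices n dd)"
proof -
  have "multi_indices n dd \<subseteq> {f. \<forall>x. (x \<in> {1..n} \<longrightarrow> f x \<in> {0..dd}) \<and> (x \<notin> {1..n} \<longrightarrow> f x = 0)}"
  proof
    fix \<alpha> assume a: "\<alpha> \<in> multi_indices n dd"
    have "\<alpha> x \<le> dd" if "x \<in> {1..n}" for x
    proof -
      have "\<alpha> x \<le> (\<Sum>k=1..n. \<alpha> k)" using that by (intro member_le_sum) auto
      then show ?thesis using a unfolding multi_indices_def by simp
    qed
    then show "\<alpha> \<in> {f. \<forall>x. (x \<in> {1..n} \<longrightarrow> f x \<in> {0..dd}) \<and> (x \<notin> {1..n} \<longrightarrow> f x = 0)}"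
      using a unfolding multi_indices_def by auto
  qed
  moreover have "finite {f. \<forall>x. (x \<in> {1..n} \<longrightarrow> f x \<in> {0..dd}) \<and> (x \<notin> {1..n} \<longrightarrow> f x = (0::nat))}"
    by (rule finite_set_of_finite_funs) auto
  ultimately show ?thesis by (rule finite_subset)
qed



lemma pf_weyl:
  assumes F: "\<And>a b. pf (F a b)"
  shows "pf (\<lambda>x. weyl n F a b c d x)"
proof -
  have P: "pf (pd u (pd v (F a b)))" for u v a b using F by simp
  have S: "pf (\<lambda>x. schouten n F a c x)" for a c
    unfolding schouten_def using P by (intro pf_diff pf_add pf_sum pf_multc pf_cmult) auto
  show ?thesis unfolding weyl_def using P S by (intro pf_diff pf_add pf_sum pf_multc pf_cmult) auto
qed

lemma sc_n: "(sc t x) n = t * x n" by (simp add: sc_def)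

theorem lemma1:
  fixes n :: nat and H :: "nat \<Rightarrow> nat \<Rightarrow> (nat \<Rightarrow> real) \<Rightarrow> real"
  assumes "n \<ge> 4"
    and "admissible n H"
    and "\<forall>a\<in>{1..n}. \<forall>b\<in>{1..n}. \<forall>c\<in>{1..n}. \<forall>d\<in>{1..n}. \<forall>x. x n \<ge> 0 \<longrightarrow> weyl n H a b c d x = 0"
    and "\<forall>i\<in>{1..n-1}. \<forall>j\<in>{1..n-1}. \<forall>x. x n = 0 \<longrightarrow> pd n (H i j) x = 0"
  shows "\<forall>a\<in>{1..n}. \<forall>b\<in>{1..n}. \<forall>x. x n \<ge> 0 \<longrightarrow> H a b x = 0"
proof -
  note n4 = assms(1) and WH = assms(3) and bdnH = assms(4)
  obtain h where hH: "\<forall>a\<in>{1..n}. \<forall>b\<in>{1..n}. \<forall>x.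
          H a b x = (\<Sum>\<alpha>\<in>multi_indices n ((n - 2) div 2). h a b \<alpha> * monomial_fun n \<alpha> x)"
    using assms(2) unfolding admissible_def by blast
  have symH: "\<forall>a\<in>{1..n}. \<forall>b\<in>{1..n}. \<forall>x. x n \<ge> 0 \<longrightarrow> H a b x = H b a x"
    and trH: "\<forall>x. x n \<ge> 0 \<longrightarrow> (\<Sum>a=1..n. H a a x) = 0"
    and anH: "\<forall>a\<in>{1..n}. \<forall>x. x n \<ge> 0 \<longrightarrow> H a n x = 0"
    and bdxH: "\<forall>i\<in>{1..n-1}. \<forall>x. x n = 0 \<longrightarrow> (\<Sum>j=1..n-1. x j * H i j x) = 0"
    using assms(2) unfolding admissible_def by blast+
  define d where "d = (n - 2) div 2"
  define MI where "MI = multi_indices n d"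
  define deg where "deg \<alpha> = (\<Sum>k=1..n. \<alpha> k)" for \<alpha> :: "nat \<Rightarrow> nat"
  define K where "K = {1..d}"
  define Hk where "Hk m a b x = (\<Sum>\<alpha>\<in>{\<alpha>\<in>MI. deg \<alpha> = m}. h a b \<alpha> * monomial_fun n \<alpha> x)" for m a b x
  have finMI: "finite MI" unfolding MI_def by (rule finite_MI)
  have finK: "finite K" unfolding K_def by simp
  have polyHk: "Hk m a b \<in> polyf {1..n}" for m a b
  proof -
    have "(\<lambda>x. \<Sum>\<alpha>\<in>{\<alpha>\<in>MI. deg \<alpha> = m}. h a b \<alpha> * monomial_fun n \<alpha> x) \<in> polyf {1..n}"
      by (intro polyf_sum polyf_cmult poly_mono)
    then show ?thesis unfolding Hk_def[abs_def] by simp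
  qed
  have pfHk: "pf (Hk m a b)" for m a b using polyHk pf_def by blast
  have hwHk: "hw 0 m (Hk m a b)" for m a b
  proof -
    have "hw 0 m (\<lambda>x. \<Sum>\<alpha>\<in>{\<alpha>\<in>MI. deg \<alpha> = m}. h a b \<alpha> * monomial_fun n \<alpha> x)"
    proof (rule hw_sum)
      fix \<alpha> assume "\<alpha> \<in> {\<alpha>\<in>MI. deg \<alpha> = m}"
      then have "deg \<alpha> = m" by simp
      then show "hw 0 m (\<lambda>x. h a b \<alpha> * monomial_fun n \<alpha> x)"
        using hw_mono[where n=n and \<alpha>=\<alpha>] unfolding deg_def by (intro hw_cmult) simp
    qed
    then show ?thesis unfolding Hk_def[abs_def] by simp
  qed
  have degK: "deg ` MI \<subseteq> K" unfolding MI_def K_def multi_indices_def deg_def d_def by auto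
  have decomp: "H a b x = (\<Sum>m\<in>K. Hk m a b x)" if "a \<in> {1..n}" "b \<in> {1..n}" for a b x
  proof -
    have "H a b x = (\<Sum>\<alpha>\<in>MI. h a b \<alpha> * monomial_fun n \<alpha> x)" using hH that unfolding MI_def d_def by blast
    also have "\<dots> = (\<Sum>m\<in>K. Hk m a b x)"
      unfolding Hk_def using sum.group[OF finMI finK degK, of "\<lambda>\<alpha>. h a b \<alpha> * monomial_fun n \<alpha> x"] by simp
    finally show ?thesis .
  qed
  have decompF: "H a b = (\<lambda>x. \<Sum>m\<in>K. Hk m a b x)" if "a \<in> {1..n}" "b \<in> {1..n}" for a b
    using decomp[OF that] by (simp add: fun_eq_iff)
  have Phalf: "\<And>x t. x n \<ge> 0 \<Longrightarrow> t > 0 \<Longrightarrow> (sc t x) n \<ge> 0" by (simp add: sc_n)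
  have Pbd: "\<And>x t. x n = 0 \<Longrightarrow> t > 0 \<Longrightarrow> (sc t x) n = 0" by (simp add: sc_n)
  have hw0: "\<forall>m\<in>K. \<forall>t>0. \<forall>x. t ^ 0 * F m (sc t x) = t ^ (m + 0) * F m x" if "\<And>m. hw 0 m (F m)" for F
    using that unfolding hw_def by simp
  have core_m: "core n m (Hk m)" if m: "m \<in> K" for m
  proof
    show "4 \<le> n" by (rule n4)
    show "1 \<le> m" using m unfolding K_def by simp
    show "\<And>a b. Hk m a b \<in> polyf {1..n}" by (rule polyHk)
    show "\<And>a b. hw 0 m (Hk m a b)" by (rule hwHk)
    show symk: "Hk m a b = Hk m b a" if a: "a \<in> {1..n}" and b: "b \<in> {1..n}" for a b
    proof
      fix x
      have "Hk m a b x - Hk m b a x = 0"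
      proof (rule ext_half[where f="\<lambda>x. Hk m a b x - Hk m b a x" and m=n])
        show "pf (\<lambda>x. Hk m a b x - Hk m b a x)" using pfHk by simp
        show "\<forall>x. 0 \<le> x n \<longrightarrow> Hk m a b x - Hk m b a x = 0"
        proof (intro allI impI)
          fix x :: "nat \<Rightarrow> real" assume x: "0 \<le> x n"
          show "Hk m a b x - Hk m b a x = 0"
          proof (rule transfer[where \<Phi>="\<lambda>j x. Hk j a b x - Hk j b a x" and s=0 and c=0 and P="\<lambda>x. 0 \<le> x n" and x=x and m=m, OF finK _ Phalf _ m x])
            show "\<forall>j\<in>K. \<forall>t>0. \<forall>x. t ^ 0 * (Hk j a b (sc t x) - Hk j b a (sc t x)) = t ^ (j + 0) * (Hk j a b x - Hk j b a x)"
              using hwHk unfolding hw_def by (simp add: right_diff_distrib)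
            show "\<And>x. 0 \<le> x n \<Longrightarrow> (\<Sum>j\<in>K. Hk j a b x - Hk j b a x) = 0"
              using symH a b decomp by (simp add: sum_subtractf)
          qed
        qed
      qed
      then show "Hk m a b x = Hk m b a x" by simp
    qed
    show "\<And>x. (\<Sum>a=1..n. Hk m a a x) = 0"
    proof -
      fix x
      show "(\<Sum>a=1..n. Hk m a a x) = 0"
      proof (rule ext_half[where f="\<lambda>x. \<Sum>a=1..n. Hk m a a x" and m=n])
        show "pf (\<lambda>x. \<Sum>a=1..n. Hk m a a x)" using pfHk by simp
        show "\<forall>x. 0 \<le> x n \<longrightarrow> (\<Sum>a=1..n. Hk m a a x) = 0"
        proof (intro allI impI)
          fix x :: "nat \<Rightarrow> real" assume x: "0 \<le> x n"
          show "(\<Sum>a=1..n. Hk m a a x) = 0"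
          proof (rule transfer[where \<Phi>="\<lambda>j x. \<Sum>a=1..n. Hk j a a x" and s=0 and c=0 and P="\<lambda>x. 0 \<le> x n" and x=x and m=m, OF finK _ Phalf _ m x])
            show "\<forall>j\<in>K. \<forall>t>0. \<forall>x. t ^ 0 * (\<Sum>a=1..n. Hk j a a (sc t x)) = t ^ (j + 0) * (\<Sum>a=1..n. Hk j a a x)"
              using hwHk unfolding hw_def by (simp add: sum_distrib_left)
            show "\<And>x. 0 \<le> x n \<Longrightarrow> (\<Sum>j\<in>K. \<Sum>a=1..n. Hk j a a x) = 0"
            proof -
              fix x :: "nat \<Rightarrow> real" assume "0 \<le> x n"
              then have "(\<Sum>a=1..n. H a a x) = 0" using trH by blast
              moreover have "(\<Sum>a=1..n. H a a x) = (\<Sum>j\<in>K. \<Sum>a=1..n. Hk j a a x)"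
                by (subst sum.swap) (rule sum.cong[OF refl], rule decomp, auto)
              ultimately show "(\<Sum>j\<in>K. \<Sum>a=1..n. Hk j a a x) = 0" by simp
            qed
          qed
        qed
      qed
    qed
    show "Hk m a n = (\<lambda>x. 0)" if a: "a \<in> {1..n}" for a
    proof
      fix x
      show "Hk m a n x = 0"
      proof (rule ext_half[where f="Hk m a n" and m=n])
        show "pf (Hk m a n)" by (rule pfHk)
        show "\<forall>x. 0 \<le> x n \<longrightarrow> Hk m a n x = 0"
        proof (intro allI impI)
          fix x :: "nat \<Rightarrow> real" assume x: "0 \<le> x n"
          show "Hk m a n x = 0"
          proof (rule transfer[where \<Phi>="\<lambda>j x. Hk j a n x" and s=0 and c=0 and P="\<lambda>x. 0 \<le> x n" and x=x and m=m, OF finK _ Phalf _ m x])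
            show "\<forall>j\<in>K. \<forall>t>0. \<forall>x. t ^ 0 * Hk j a n (sc t x) = t ^ (j + 0) * Hk j a n x"
              using hwHk unfolding hw_def by simp
            show "\<And>x. 0 \<le> x n \<Longrightarrow> (\<Sum>j\<in>K. Hk j a n x) = 0"
            proof -
              fix x :: "nat \<Rightarrow> real" assume x: "0 \<le> x n"
              have "H a n x = (\<Sum>m\<in>K. Hk m a n x)" by (rule decomp) (use a n4 in auto)
              then show "(\<Sum>j\<in>K. Hk j a n x) = 0" using anH a x by simp
            qed
          qed
        qed
      qed
    qed
    show "weyl n (Hk m) a b c d x = 0" if a: "a \<in> {1..n}" and b: "b \<in> {1..n}" and c: "c \<in> {1..n}" and dd: "d \<in> {1..n}" for a b c d x
    proof (rule ext_half[where f="\<lambda>x. weyl n (Hk m) a b c d x" and m=n])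
      show "pf (\<lambda>x. weyl n (Hk m) a b c d x)" by (rule pf_weyl) (rule pfHk)
      show "\<forall>x. 0 \<le> x n \<longrightarrow> weyl n (Hk m) a b c d x = 0"
      proof (intro allI impI)
        fix x :: "nat \<Rightarrow> real" assume x: "0 \<le> x n"
        show "weyl n (Hk m) a b c d x = 0"
        proof (rule transfer[where \<Phi>="\<lambda>j x. weyl n (Hk j) a b c d x" and s=2 and c=0 and P="\<lambda>x. 0 \<le> x n" and x=x and m=m, OF finK _ Phalf _ m x])
          show "\<forall>j\<in>K. \<forall>t>0. \<forall>x. t ^ 2 * weyl n (Hk j) a b c d (sc t x) = t ^ (j + 0) * weyl n (Hk j) a b c d x"
            using hw_weyl[OF pfHk hwHk] unfolding hw_def by simp
          show "\<And>x. 0 \<le> x n \<Longrightarrow> (\<Sum>j\<in>K. weyl n (Hk j) a b c d x) = 0"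
          proof -
            fix x :: "nat \<Rightarrow> real" assume x: "0 \<le> x n"
            have "(\<Sum>j\<in>K. weyl n (Hk j) a b c d x) = weyl n (\<lambda>a b x. \<Sum>j\<in>K. Hk j a b x) a b c d x"
              by (rule weyl_sum[symmetric, OF finK pfHk])
            also have "\<dots> = weyl n H a b c d x"
              by (rule weyl_cong) (use decompF a b c dd in auto)
            also have "\<dots> = 0" using WH a b c dd x by blast
            finally show "(\<Sum>j\<in>K. weyl n (Hk j) a b c d x) = 0" .
          qed
        qed
      qed
    qed
    show "pd n (Hk m i j) x = 0" if i: "i \<in> {1..n-1}" and j: "j \<in> {1..n-1}" and x: "x n = 0" for i j x
    proof (rule transfer[where \<Phi>="\<lambda>j' x. pd n (Hk j' i j) x" and s=1 and c=0 and P="\<lambda>x. x n = 0" and x=x and m=m, OF finK _ Pbd _ m x])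
      show "\<forall>j'\<in>K. \<forall>t>0. \<forall>x. t ^ 1 * pd n (Hk j' i j) (sc t x) = t ^ (j' + 0) * pd n (Hk j' i j) x"
        using hw_pd[OF pfHk hwHk] unfolding hw_def by simp
      show "\<And>x. x n = 0 \<Longrightarrow> (\<Sum>j'\<in>K. pd n (Hk j' i j) x) = 0"
      proof -
        fix x :: "nat \<Rightarrow> real" assume x: "x n = 0"
        have ij: "i \<in> {1..n}" "j \<in> {1..n}" using i j by auto
        have "(\<Sum>j'\<in>K. pd n (Hk j' i j) x) = pd n (H i j) x"
          unfolding decompF[OF ij] using pfHk by simp
        then show "(\<Sum>j'\<in>K. pd n (Hk j' i j) x) = 0" using bdnH i j x by simp
      qed
    qed
    show "(\<Sum>j=1..n-1. x j * Hk m i j x) = 0" if i: "i \<in> {1..n-1}" and x: "x n = 0" for i x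
    proof (rule transfer[where \<Phi>="\<lambda>j' x. \<Sum>j=1..n-1. x j * Hk j' i j x" and s=0 and c=1 and P="\<lambda>x. x n = 0" and x=x and m=m, OF finK _ Pbd _ m x])
      show "\<forall>j'\<in>K. \<forall>t>0. \<forall>x. t ^ 0 * (\<Sum>j=1..n-1. sc t x j * Hk j' i j (sc t x)) = t ^ (j' + 1) * (\<Sum>j=1..n-1. x j * Hk j' i j x)"
      proof (intro ballI allI impI)
        fix j' and t :: real and x assume "t > 0"
        then have "Hk j' i j (sc t x) = t ^ j' * Hk j' i j x" for j using hwHk unfolding hw_def by simp
        then show "t ^ 0 * (\<Sum>j=1..n-1. sc t x j * Hk j' i j (sc t x)) = t ^ (j' + 1) * (\<Sum>j=1..n-1. x j * Hk j' i j x)"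
          by (simp add: sc_def sum_distrib_left mult_ac)
      qed
      show "\<And>x. x n = 0 \<Longrightarrow> (\<Sum>j'\<in>K. \<Sum>j=1..n-1. x j * Hk j' i j x) = 0"
      proof -
        fix x :: "nat \<Rightarrow> real" assume x: "x n = 0"
        have "(\<Sum>j=1..n-1. x j * H i j x) = (\<Sum>j'\<in>K. \<Sum>j=1..n-1. x j * Hk j' i j x)"
        proof -
          have "(\<Sum>j=1..n-1. x j * H i j x) = (\<Sum>j=1..n-1. \<Sum>j'\<in>K. x j * Hk j' i j x)"
          proof (rule sum.cong[OF refl])
            fix j assume "j \<in> {1..n-1}"
            then have "H i j x = (\<Sum>m\<in>K. Hk m i j x)" by (intro decomp) (use i in auto)
            then show "x j * H i j x = (\<Sum>j'\<in>K. x j * Hk j' i j x)" by (simp add: sum_distrib_left)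
          qed
          then show ?thesis by (simp add: sum.swap[of _ K])
        qed
        then show "(\<Sum>j'\<in>K. \<Sum>j=1..n-1. x j * Hk j' i j x) = 0" using bdxH i x by simp
      qed
    qed
  qed
  show ?thesis
  proof (intro ballI allI impI)
    fix a b x assume a: "a \<in> {1..n}" and b: "b \<in> {1..n}"
    have "Hk m a b x = 0" if "m \<in> K" for m using core.G_zero[OF core_m[OF that] a b] .
    then show "H a b x = 0" using decomp[OF a b] by simp
  qed
qed



end
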